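(* Let $N,K\ge1$ and $T\ge1$. Let $\phi_r\in\mathbb{R}$, $\sigma_r^2>0$. For $t=1,\dots,T$ independently, let $\theta_t\sim\mathcal{N}(\phi_r,\sigma_r^2)$, and conditionally on $\theta_t$ let $x_{t,1},\dots,x_{t,N}$ and $y_{t,1},\dots,y_{t,K}$ be independent $\mathcal{N}(\theta_t,1)$ random variables. Define for $\phi\in\mathbb{R}$, $\sigma^2>0$, $$\ell_t^{\mathrm{tr}}(\theta_t,\phi,\sigma^2)=\tfrac12\log\sigma^2+\frac{(\theta_t-\phi)^2}{2\sigma^2}+\tfrac12\sum_{n=1}^N(x_{t,n}-\theta_t)^2,$$ $\hat\theta_t(\phi,\sigma^2)=\arg\min_{\theta_t}\ell_t^{\mathrm{tr}}(\theta_t,\phi,\sigma^2)$, and $$\hat\ell_{\mathrm{PLL}}(\phi,\sigma^2)=\tfrac12\sum_{t=1}^T\sum_{k=1}^K\big(y_{t,k}-\hat\theta_t(\phi,\sigma^2)\big)^2.$$ Let $(\hat\phi,\hat\sigma^2)$ be the solution of $\nabla_{(\phi,\sigma^2)}\hat\ell_{\mathrm{PLL}}(\phi,\sigma^2)=0$. Then, as $T\to\infty$, $\hat\phi(\hat\sigma^2)\to\phi_r$ and $\hat\sigma^2\to\sigma_r^2$ in probability.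
   Context: This is a univariate hierarchical normal model with one module; $\hat\ell_{\mathrm{PLL}}$ is (up to a constant) the negative validation log-likelihood evaluated at the MAP task parameters, and $(\hat\phi,\hat\sigma^2)$ are the stationary points of it with respect to the meta-parameters. *)

theory Defs
  imports "HOL-Probability.Probability"
begin

text \<open>Index type for the independent primitive random variables:
  task parameters theta_t, training noises for x_{t,n}, validation noises for y_{t,k}.\<close>
datatype idx = Th nat | Ex nat nat | Ey nat nat

text \<open>Training loss of task t (data xs = x_{t,0..N-1}), meta-parameters phi and s = sigma^2.\<close>
definition ell_tr :: "nat \<Rightarrow> (nat \<Rightarrow> real) \<Rightarrow> real \<Rightarrow> real \<Rightarrow> real \<Rightarrow> real" where
  "ell_tr N xs \<theta> \<phi> s =
     ln s / 2 + (\<theta> - \<phi>)\<^sup>2 / (2 * s) + (\<Sum>n<N. (xs n - \<theta>)\<^sup>2) / 2"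

definition theta_hat :: "nat \<Rightarrow> (nat \<Rightarrow> real) \<Rightarrow> real \<Rightarrow> real \<Rightarrow> real" where
  "theta_hat N xs \<phi> s = (ARG_MIN (\<lambda>\<theta>. ell_tr N xs \<theta> \<phi> s) \<theta>. True)"

definition ell_PLL :: "nat \<Rightarrow> nat \<Rightarrow> nat \<Rightarrow> (nat \<Rightarrow> nat \<Rightarrow> real) \<Rightarrow> (nat \<Rightarrow> nat \<Rightarrow> real)
    \<Rightarrow> real \<Rightarrow> real \<Rightarrow> real" where
  "ell_PLL N K T xd yd \<phi> s =
     (\<Sum>t<T. \<Sum>k<K. (yd t k - theta_hat N (xd t) \<phi> s)\<^sup>2) / 2"

definition PLL_stationary :: "nat \<Rightarrow> nat \<Rightarrow> nat \<Rightarrow> (nat \<Rightarrow> nat \<Rightarrow> real) \<Rightarrow> (nat \<Rightarrow> nat \<Rightarrow> real)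
    \<Rightarrow> real \<Rightarrow> real \<Rightarrow> bool" where
  "PLL_stationary N K T xd yd \<phi> s \<longleftrightarrow>
     s > 0 \<and>
     ((\<lambda>p. ell_PLL N K T xd yd (fst p) (snd p)) has_derivative (\<lambda>h. 0)) (at (\<phi>, s))"

end

theory Submission
  imports Defs
begin

lemma sum_sq_expand:
  fixes xs :: "nat \<Rightarrow> real"
  shows "(\<Sum>n<N. (xs n - \<theta>)\<^sup>2) = (\<Sum>n<N. (xs n)\<^sup>2) - 2 * \<theta> * (\<Sum>n<N. xs n) + real N * \<theta>\<^sup>2"
  by (simp add: power2_diff sum.distrib sum_subtractf sum_distrib_left sum_distrib_right algebra_simps)

lemma theta_hat_eq:
  assumes s: "s > 0"
  shows "theta_hat N xs \<phi> s = (\<phi> + s * (\<Sum>n<N. xs n)) / (1 + s * real N)"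
proof -
  define S where "S = (\<Sum>n<N. xs n)"
  define Q where "Q = (\<Sum>n<N. (xs n)\<^sup>2)"
  define c where "c = (\<phi> + s * S) / (1 + s * real N)"
  have pos: "1 + s * real N > 0" using s by (simp add: add_pos_nonneg)
  have diff: "ell_tr N xs \<theta> \<phi> s - ell_tr N xs c \<phi> s = (1 + s * real N) / (2 * s) * (\<theta> - c)\<^sup>2" for \<theta>
  proof -
    have "ell_tr N xs \<theta> \<phi> s - ell_tr N xs c \<phi> s =
      ((\<theta> - \<phi>)\<^sup>2 - (c - \<phi>)\<^sup>2) / (2 * s) + ((Q - 2 * \<theta> * S + real N * \<theta>\<^sup>2) - (Q - 2 * c * S + real N * c\<^sup>2)) / 2"
      unfolding ell_tr_def sum_sq_expand S_def Q_def using s by (simp add: field_simps)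
    also have "\<dots> = (1 + s * real N) / (2 * s) * (\<theta> - c)\<^sup>2"
    proof -
      have phi: "\<phi> = c * (1 + s * real N) - s * S" unfolding c_def using pos by simp
      have "((\<theta> - \<phi>)\<^sup>2 - (c - \<phi>)\<^sup>2) + s * ((Q - 2 * \<theta> * S + real N * \<theta>\<^sup>2) - (Q - 2 * c * S + real N * c\<^sup>2))
           = (1 + s * real N) * (\<theta> - c)\<^sup>2"
        unfolding phi by (simp add: power2_eq_square algebra_simps)
      moreover have "\<And>A B. A / (2 * s) + B / 2 = (A + s * B) / (2 * s)" using s by (simp add: field_simps)
      ultimately show ?thesis by simp
    qed
    finally show ?thesis .
  qed
  have "(SOME x. is_arg_min (\<lambda>\<theta>. ell_tr N xs \<theta> \<phi> s) (\<lambda>\<theta>. True) x) = c"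
  proof (rule some_equality)
    show "is_arg_min (\<lambda>\<theta>. ell_tr N xs \<theta> \<phi> s) (\<lambda>\<theta>. True) c"
      unfolding is_arg_min_def
    proof (clarsimp)
      fix y assume "ell_tr N xs y \<phi> s < ell_tr N xs c \<phi> s"
      moreover have "0 \<le> (1 + s * real N) / (2 * s) * (y - c)\<^sup>2" using s pos by simp
      ultimately show False using diff[of y] by linarith
    qed
  next
    fix x assume "is_arg_min (\<lambda>\<theta>. ell_tr N xs \<theta> \<phi> s) (\<lambda>\<theta>. True) x"
    then have "\<not> ell_tr N xs c \<phi> s < ell_tr N xs x \<phi> s" unfolding is_arg_min_def by auto
    moreover have "x \<noteq> c \<Longrightarrow> 0 < (1 + s * real N) / (2 * s) * (x - c)\<^sup>2" using s pos by simp
    ultimately show "x = c" using diff[of x] by force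
  qed
  then show ?thesis unfolding theta_hat_def arg_min_def c_def S_def .
qed

lemma g_deriv:
  fixes S :: real
  assumes d: "1 + s * real N \<noteq> 0"
  shows "((\<lambda>p. (fst p + snd p * S) / (1 + snd p * real N)) has_derivative
     (\<lambda>h. fst h / (1 + s * real N) + snd h * (S - real N * \<phi>) / (1 + s * real N)\<^sup>2)) (at (\<phi>, s))"
proof -
  have f: "((\<lambda>p. fst p + snd p * S) has_derivative (\<lambda>h. fst h + snd h * S)) (at (\<phi>, s))"
    by (intro has_derivative_add has_derivative_fst has_derivative_snd has_derivative_ident has_derivative_mult_left)
  have g: "((\<lambda>p. 1 + snd p * real N) has_derivative (\<lambda>h. 0 + snd h * real N)) (at (\<phi>, s))"
    by (intro has_derivative_add has_derivative_const has_derivative_snd has_derivative_ident has_derivative_mult_left)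
  have "((\<lambda>p. (fst p + snd p * S) / (1 + snd p * real N)) has_derivative
     (\<lambda>h. ((fst h + snd h * S) * (1 + s * real N) - (\<phi> + s * S) * (0 + snd h * real N)) / ((1 + s * real N) * (1 + s * real N)))) (at (\<phi>, s))"
    using has_derivative_divide'[OF f g] d by simp
  moreover have "(\<lambda>h. ((fst h + snd h * S) * (1 + s * real N) - (\<phi> + s * S) * (0 + snd h * real N)) / ((1 + s * real N) * (1 + s * real N)))
     = (\<lambda>h. fst h / (1 + s * real N) + snd h * (S - real N * \<phi>) / (1 + s * real N)\<^sup>2)"
  proof (rule ext)
    fix h :: "real \<times> real"
    define D where "D = 1 + s * real N"
    have D0: "D \<noteq> 0" using d D_def by simp
    have num: "(fst h + snd h * S) * D - (\<phi> + s * S) * (0 + snd h * real N) = fst h * D + snd h * (S - real N * \<phi>)"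
      unfolding D_def by (simp add: algebra_simps)
    show "((fst h + snd h * S) * (1 + s * real N) - (\<phi> + s * S) * (0 + snd h * real N)) / ((1 + s * real N) * (1 + s * real N))
       = fst h / (1 + s * real N) + snd h * (S - real N * \<phi>) / (1 + s * real N)\<^sup>2"
      unfolding D_def[symmetric] num using D0 by (simp add: field_simps power2_eq_square)
  qed
  ultimately show ?thesis by simp
qed


lemma F_deriv:
  fixes S :: "nat \<Rightarrow> real" and y :: "nat \<Rightarrow> nat \<Rightarrow> real"
  assumes d: "1 + s * real N \<noteq> 0"
  shows "((\<lambda>p. (\<Sum>t<T. \<Sum>k<K. (y t k - (fst p + snd p * S t) / (1 + snd p * real N))\<^sup>2) / 2) has_derivative
     (\<lambda>h. (- (\<Sum>t<T. \<Sum>k<K. (y t k - (\<phi> + s * S t) / (1 + s * real N))) / (1 + s * real N)) * fst h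
        + (- (\<Sum>t<T. \<Sum>k<K. (y t k - (\<phi> + s * S t) / (1 + s * real N)) * (S t - real N * \<phi>)) / (1 + s * real N)\<^sup>2) * snd h)) (at (\<phi>, s))"
proof -
  define d where "d = 1 + s * real N"
  define g where "g t = (\<phi> + s * S t) / d" for t
  define G' where "G' t h = fst h / d + snd h * (S t - real N * \<phi>) / d\<^sup>2" for t and h :: "real \<times> real"
  have gd: "((\<lambda>p. (fst p + snd p * S t) / (1 + snd p * real N)) has_derivative G' t) (at (\<phi>, s))" for t
    using g_deriv[OF d, of "S t" \<phi>] unfolding G'_def d_def .
  have sq: "((\<lambda>p. (y t k - (fst p + snd p * S t) / (1 + snd p * real N))\<^sup>2) has_derivative
      (\<lambda>h. (y t k - g t) * (0 - G' t h) + (0 - G' t h) * (y t k - g t))) (at (\<phi>, s))" for t k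
  proof -
    have i: "((\<lambda>p. y t k - (fst p + snd p * S t) / (1 + snd p * real N)) has_derivative (\<lambda>h. 0 - G' t h)) (at (\<phi>, s))"
      by (intro has_derivative_diff has_derivative_const gd)
    show ?thesis using has_derivative_mult[OF i i] unfolding power2_eq_square g_def d_def by simp
  qed
  have "((\<lambda>p. (\<Sum>t<T. \<Sum>k<K. (y t k - (fst p + snd p * S t) / (1 + snd p * real N))\<^sup>2) * (1/2)) has_derivative
     (\<lambda>h. (\<Sum>t<T. \<Sum>k<K. (y t k - g t) * (0 - G' t h) + (0 - G' t h) * (y t k - g t)) * (1/2))) (at (\<phi>, s))"
    by (intro has_derivative_mult_left has_derivative_sum sq)
  moreover have "(\<lambda>h. (\<Sum>t<T. \<Sum>k<K. (y t k - g t) * (0 - G' t h) + (0 - G' t h) * (y t k - g t)) * (1/2)) =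
     (\<lambda>h. (- (\<Sum>t<T. \<Sum>k<K. (y t k - (\<phi> + s * S t) / (1 + s * real N))) / (1 + s * real N)) * fst h
        + (- (\<Sum>t<T. \<Sum>k<K. (y t k - (\<phi> + s * S t) / (1 + s * real N)) * (S t - real N * \<phi>)) / (1 + s * real N)\<^sup>2) * snd h)"
  proof (rule ext)
    fix h :: "real \<times> real"
    have "(\<Sum>t<T. \<Sum>k<K. (y t k - g t) * (0 - G' t h) + (0 - G' t h) * (y t k - g t)) * (1/2)
       = (\<Sum>t<T. \<Sum>k<K. (- (y t k - g t) / d) * fst h + (- (y t k - g t) * (S t - real N * \<phi>) / d\<^sup>2) * snd h)"
      unfolding sum_distrib_right G'_def by (intro sum.cong refl) (simp add: field_simps, simp add: add_divide_distrib[symmetric] algebra_simps)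
    also have "\<dots> = (- (\<Sum>t<T. \<Sum>k<K. (y t k - g t)) / d) * fst h
        + (- (\<Sum>t<T. \<Sum>k<K. (y t k - g t) * (S t - real N * \<phi>)) / d\<^sup>2) * snd h"
      by (simp add: sum.distrib sum_distrib_right sum_divide_distrib sum_negf[symmetric] sum_subtractf[symmetric]) (intro sum.cong refl, simp add: minus_divide_left algebra_simps)
    finally show "(\<Sum>t<T. \<Sum>k<K. (y t k - g t) * (0 - G' t h) + (0 - G' t h) * (y t k - g t)) * (1/2) =
      (- (\<Sum>t<T. \<Sum>k<K. (y t k - (\<phi> + s * S t) / (1 + s * real N))) / (1 + s * real N)) * fst h
        + (- (\<Sum>t<T. \<Sum>k<K. (y t k - (\<phi> + s * S t) / (1 + s * real N)) * (S t - real N * \<phi>)) / (1 + s * real N)\<^sup>2) * snd h"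
      unfolding g_def d_def .
  qed
  ultimately show ?thesis by simp
qed

lemma ell_PLL_eq:
  assumes "s > 0"
  shows "ell_PLL N K T xd yd \<phi> s = (\<Sum>t<T. \<Sum>k<K. (yd t k - (\<phi> + s * (\<Sum>n<N. xd t n)) / (1 + s * real N))\<^sup>2) / 2"
  unfolding ell_PLL_def using theta_hat_eq[OF assms] by simp

lemma stationary_D:
  fixes xd yd :: "nat \<Rightarrow> nat \<Rightarrow> real" and N :: nat
  assumes s: "s > 0"
  defines "S \<equiv> (\<lambda>t. (\<Sum>n<N. xd t n))"
  shows "PLL_stationary N K T xd yd \<phi> s \<longleftrightarrow>
    (\<Sum>t<T. \<Sum>k<K. (yd t k - (\<phi> + s * S t) / (1 + s * real N))) = 0 \<and>
    (\<Sum>t<T. \<Sum>k<K. (yd t k - (\<phi> + s * S t) / (1 + s * real N)) * (S t - real N * \<phi>)) = 0"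
proof -
  have d: "1 + s * real N > 0" using s by (simp add: add_pos_nonneg)
  let ?F = "\<lambda>p. (\<Sum>t<T. \<Sum>k<K. (yd t k - (fst p + snd p * S t) / (1 + snd p * real N))\<^sup>2) / 2"
  define D1 where "D1 = - (\<Sum>t<T. \<Sum>k<K. (yd t k - (\<phi> + s * S t) / (1 + s * real N))) / (1 + s * real N)"
  define D2 where "D2 = - (\<Sum>t<T. \<Sum>k<K. (yd t k - (\<phi> + s * S t) / (1 + s * real N)) * (S t - real N * \<phi>)) / (1 + s * real N)\<^sup>2"
  have Fd: "(?F has_derivative (\<lambda>h. D1 * fst h + D2 * snd h)) (at (\<phi>, s))"
    unfolding D1_def D2_def using F_deriv[where S=S and y=yd and s=s and N=N and T=T and K=K and \<phi>=\<phi>] d by simp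
  have Ld: "((\<lambda>p. ell_PLL N K T xd yd (fst p) (snd p)) has_derivative (\<lambda>h. D1 * fst h + D2 * snd h)) (at (\<phi>, s))"
  proof (rule has_derivative_transform_within_open[OF Fd, of "{p. snd p > 0}"])
    show "open {p :: real \<times> real. snd p > 0}"
      by (intro open_Collect_less continuous_intros)
    show "(\<phi>, s) \<in> {p. snd p > 0}" using s by simp
    fix p :: "real \<times> real" assume "p \<in> {p. snd p > 0}"
    then show "?F p = ell_PLL N K T xd yd (fst p) (snd p)"
      using ell_PLL_eq[of "snd p" N K T xd yd "fst p"] unfolding S_def by simp
  qed
  have "PLL_stationary N K T xd yd \<phi> s \<longleftrightarrow> D1 = 0 \<and> D2 = 0"
  proof
    assume "PLL_stationary N K T xd yd \<phi> s"
    then have "((\<lambda>p. ell_PLL N K T xd yd (fst p) (snd p)) has_derivative (\<lambda>h. 0)) (at (\<phi>, s))"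
      unfolding PLL_stationary_def by simp
    from has_derivative_unique[OF Ld this] have "\<And>h. D1 * fst h + D2 * snd h = 0" by metis
    from this[of "(1,0)"] this[of "(0,1)"] show "D1 = 0 \<and> D2 = 0" by simp
  next
    assume "D1 = 0 \<and> D2 = 0"
    then show "PLL_stationary N K T xd yd \<phi> s" using Ld s unfolding PLL_stationary_def by simp
  qed
  moreover have "(D1 = 0 \<and> D2 = 0) \<longleftrightarrow> ((\<Sum>t<T. \<Sum>k<K. (yd t k - (\<phi> + s * S t) / (1 + s * real N))) = 0 \<and>
    (\<Sum>t<T. \<Sum>k<K. (yd t k - (\<phi> + s * S t) / (1 + s * real N)) * (S t - real N * \<phi>)) = 0)"
    using d unfolding D1_def D2_def by simp
  ultimately show ?thesis by simp
qed

definition avgx :: "nat \<Rightarrow> (nat \<Rightarrow> nat \<Rightarrow> real) \<Rightarrow> nat \<Rightarrow> real" where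
  "avgx N xd t = (\<Sum>n<N. xd t n) / real N"

definition mean1 :: "nat \<Rightarrow> (nat \<Rightarrow> real) \<Rightarrow> real" where
  "mean1 T f = (\<Sum>t<T. f t) / real T"

lemma stationary_char:
  fixes xd yd :: "nat \<Rightarrow> nat \<Rightarrow> real"
  assumes N: "N \<ge> 1" and K: "K \<ge> 1" and T: "T > 0" and s: "s > 0"
  defines "w \<equiv> s * real N / (1 + s * real N)"
  defines "a \<equiv> avgx N xd" and "b \<equiv> avgx K yd"
  shows "PLL_stationary N K T xd yd \<phi> s \<longleftrightarrow>
     (mean1 T b - (1 - w) * \<phi> - w * mean1 T a = 0 \<and>
      mean1 T (\<lambda>t. a t * b t) - (1 - w) * \<phi> * mean1 T a - w * mean1 T (\<lambda>t. (a t)\<^sup>2) = 0)"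
proof -
  have d: "1 + s * real N > 0" using s by (simp add: add_pos_nonneg)
  define S where "S t = (\<Sum>n<N. xd t n)" for t
  define g where "g t = (\<phi> + s * S t) / (1 + s * real N)" for t
  have Sa: "S t = real N * a t" for t using N unfolding S_def a_def avgx_def by simp
  have yb: "(\<Sum>k<K. yd t k) = real K * b t" for t using K unfolding b_def avgx_def by simp
  have ga: "g t = (1 - w) * \<phi> + w * a t" for t
  proof -
    have w1: "1 - w = 1 / (1 + s * real N)" unfolding w_def using d by (simp add: field_simps)
    show ?thesis unfolding g_def Sa w1 unfolding w_def by (simp add: add_divide_distrib)
  qed
  have X1: "(\<Sum>t<T. \<Sum>k<K. (yd t k - g t)) = real K * real T * (mean1 T b - (1 - w) * \<phi> - w * mean1 T a)"
  proof -
    have "(\<Sum>t<T. \<Sum>k<K. (yd t k - g t)) = (\<Sum>t<T. real K * (b t - g t))"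
      by (intro sum.cong refl) (simp add: sum_subtractf yb algebra_simps)
    also have "\<dots> = real K * ((\<Sum>t<T. b t) - (1 - w) * \<phi> * real T - w * (\<Sum>t<T. a t))"
      by (simp add: ga sum_subtractf sum.distrib sum_distrib_left[symmetric] algebra_simps)
    also have "\<dots> = real K * real T * (mean1 T b - (1 - w) * \<phi> - w * mean1 T a)"
      using T unfolding mean1_def by (simp add: field_simps)
    finally show ?thesis .
  qed
  have X2: "(\<Sum>t<T. \<Sum>k<K. (yd t k - g t) * (S t - real N * \<phi>)) = real K * real N * real T *
      ((mean1 T (\<lambda>t. a t * b t) - (1 - w) * \<phi> * mean1 T a - w * mean1 T (\<lambda>t. (a t)\<^sup>2))
        - \<phi> * (mean1 T b - (1 - w) * \<phi> - w * mean1 T a))"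
  proof -
    have "(\<Sum>t<T. \<Sum>k<K. (yd t k - g t) * (S t - real N * \<phi>)) = (\<Sum>t<T. real K * real N * (b t - g t) * (a t - \<phi>))"
    proof (intro sum.cong refl)
      fix t
      have "(\<Sum>k<K. (yd t k - g t) * (S t - real N * \<phi>)) = (\<Sum>k<K. (yd t k - g t)) * (S t - real N * \<phi>)"
        by (simp only: sum_distrib_right)
      also have "\<dots> = real K * real N * (b t - g t) * (a t - \<phi>)"
        by (simp add: sum_subtractf yb Sa algebra_simps)
      finally show "(\<Sum>k<K. (yd t k - g t) * (S t - real N * \<phi>)) = real K * real N * (b t - g t) * (a t - \<phi>)" .
    qed
    also have "\<dots> = real K * real N * ((\<Sum>t<T. a t * b t) - (1 - w) * \<phi> * (\<Sum>t<T. a t) - w * (\<Sum>t<T. (a t)\<^sup>2)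
         - \<phi> * ((\<Sum>t<T. b t) - (1 - w) * \<phi> * real T - w * (\<Sum>t<T. a t)))"
      by (simp add: ga sum_subtractf sum.distrib sum_distrib_left[symmetric] power2_eq_square algebra_simps,
          simp add: sum_distrib_left mult.commute)
    also have "\<dots> = real K * real N * real T *
      ((mean1 T (\<lambda>t. a t * b t) - (1 - w) * \<phi> * mean1 T a - w * mean1 T (\<lambda>t. (a t)\<^sup>2))
        - \<phi> * (mean1 T b - (1 - w) * \<phi> - w * mean1 T a))"
      using T unfolding mean1_def by (simp add: field_simps)
    finally show ?thesis .
  qed
  have "PLL_stationary N K T xd yd \<phi> s \<longleftrightarrow>
    (\<Sum>t<T. \<Sum>k<K. (yd t k - g t)) = 0 \<and> (\<Sum>t<T. \<Sum>k<K. (yd t k - g t) * (S t - real N * \<phi>)) = 0"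
    unfolding g_def S_def using stationary_D[OF s] by simp
  also have "\<dots> \<longleftrightarrow> (mean1 T b - (1 - w) * \<phi> - w * mean1 T a = 0 \<and>
      mean1 T (\<lambda>t. a t * b t) - (1 - w) * \<phi> * mean1 T a - w * mean1 T (\<lambda>t. (a t)\<^sup>2) = 0)"
    unfolding X1 X2 using N K T by auto
  finally show ?thesis .
qed

definition phistar :: "real \<Rightarrow> real \<Rightarrow> real \<Rightarrow> real \<Rightarrow> real" where
  "phistar A B Saa Sab = (let w = (Sab - A * B) / (Saa - A\<^sup>2) in (B - w * A) / (1 - w))"

definition sstar :: "nat \<Rightarrow> real \<Rightarrow> real \<Rightarrow> real \<Rightarrow> real \<Rightarrow> real" where
  "sstar N A B Saa Sab = (let w = (Sab - A * B) / (Saa - A\<^sup>2) in w / (real N * (1 - w)))"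

lemma stationary_exists:
  fixes xd yd :: "nat \<Rightarrow> nat \<Rightarrow> real"
  assumes N: "N \<ge> 1" and K: "K \<ge> 1" and T: "T > 0"
  defines "A \<equiv> mean1 T (avgx N xd)" and "B \<equiv> mean1 T (avgx K yd)"
    and "Saa \<equiv> mean1 T (\<lambda>t. (avgx N xd t)\<^sup>2)" and "Sab \<equiv> mean1 T (\<lambda>t. avgx N xd t * avgx K yd t)"
  assumes V: "Saa - A\<^sup>2 > 0" and w0: "(Sab - A * B) / (Saa - A\<^sup>2) > 0" and w1: "(Sab - A * B) / (Saa - A\<^sup>2) < 1"
  shows "PLL_stationary N K T xd yd (phistar A B Saa Sab) (sstar N A B Saa Sab)"
proof -
  define wv where "wv = (Sab - A * B) / (Saa - A\<^sup>2)"
  define s where "s = wv / (real N * (1 - wv))"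
  define \<phi> where "\<phi> = (B - wv * A) / (1 - wv)"
  have Np: "real N > 0" using N by simp
  have wv0: "0 < wv" "wv < 1" using w0 w1 unfolding wv_def by auto
  have s0: "s > 0" unfolding s_def using wv0 Np by simp
  have ws: "s * real N / (1 + s * real N) = wv"
  proof -
    have u: "s * real N = wv / (1 - wv)" unfolding s_def using Np wv0 by (simp add: field_simps)
    have "s * real N / (1 + s * real N) = (wv / (1 - wv)) / (1 + wv / (1 - wv))" by (simp only: u)
    also have "\<dots> = wv" using wv0 by (simp add: field_simps)
    finally show ?thesis .
  qed
  have C: "Sab - A * B = wv * (Saa - A\<^sup>2)" unfolding wv_def using V by simp
  have "PLL_stationary N K T xd yd \<phi> s"
    unfolding stationary_char[OF N K T s0] ws
    unfolding A_def[symmetric] B_def[symmetric] Saa_def[symmetric] Sab_def[symmetric]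
  proof
    have e: "(1 - wv) * \<phi> = B - wv * A" unfolding \<phi>_def using wv0 by simp
    show "B - (1 - wv) * \<phi> - wv * A = 0" using e by simp
    have e': "(1 - wv) * \<phi> * A = (B - wv * A) * A" using e by simp
    have "Sab - (B - wv * A) * A - wv * Saa = 0" using C by (simp add: algebra_simps power2_eq_square)
    then show "Sab - (1 - wv) * \<phi> * A - wv * Saa = 0" by (subst e') simp
  qed
  then show ?thesis unfolding phistar_def sstar_def Let_def wv_def[symmetric] s_def[symmetric] \<phi>_def[symmetric] .
qed

lemma stationary_unique:
  fixes xd yd :: "nat \<Rightarrow> nat \<Rightarrow> real"
  assumes N: "N \<ge> 1" and K: "K \<ge> 1" and T: "T > 0"
  defines "A \<equiv> mean1 T (avgx N xd)" and "B \<equiv> mean1 T (avgx K yd)"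
    and "Saa \<equiv> mean1 T (\<lambda>t. (avgx N xd t)\<^sup>2)" and "Sab \<equiv> mean1 T (\<lambda>t. avgx N xd t * avgx K yd t)"
  assumes V: "Saa - A\<^sup>2 > 0" and st: "PLL_stationary N K T xd yd \<phi> s"
  shows "\<phi> = phistar A B Saa Sab \<and> s = sstar N A B Saa Sab"
proof -
  have s0: "s > 0" using st unfolding PLL_stationary_def by simp
  have Np: "real N > 0" using N by simp
  define w where "w = s * real N / (1 + s * real N)"
  have d: "1 + s * real N > 0" using s0 by (simp add: add_pos_nonneg)
  have w0: "0 < w" "w < 1" unfolding w_def using s0 Np d by (auto simp: field_simps)
  from st[unfolded stationary_char[OF N K T s0]]
  have e1: "B - (1 - w) * \<phi> - w * A = 0" and e2: "Sab - (1 - w) * \<phi> * A - w * Saa = 0"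
    unfolding A_def[symmetric] B_def[symmetric] Saa_def[symmetric] Sab_def[symmetric] w_def by auto
  have "Sab - A * B = w * (Saa - A\<^sup>2)"
  proof -
    have "(1 - w) * \<phi> = B - w * A" using e1 by simp
    then have "Sab - (B - w * A) * A - w * Saa = 0" using e2 by (metis mult.commute mult.assoc)
    then show ?thesis by (simp add: algebra_simps power2_eq_square)
  qed
  then have wv: "(Sab - A * B) / (Saa - A\<^sup>2) = w" using V by simp
  have phi: "\<phi> = (B - w * A) / (1 - w)" using e1 w0 by (simp add: field_simps)
  have s: "s = w / (real N * (1 - w))"
  proof -
    have "1 - w = 1 / (1 + s * real N)" unfolding w_def using d by (simp add: field_simps)
    then have "w / (real N * (1 - w)) = w * (1 + s * real N) / real N" by simp
    also have "w * (1 + s * real N) = s * real N" unfolding w_def using d by simp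
    finally show ?thesis using Np by simp
  qed
  show ?thesis unfolding phistar_def sstar_def Let_def wv using phi s by simp
qed

lemma dist_pair_le: "dist (x, y) (x', y') \<le> dist x x' + dist y y'"
  unfolding dist_Pair_Pair by (rule order_trans[OF sqrt_sum_squares_le_sum_abs]) simp

lemma isCont_eps:
  fixes f :: "'a::metric_space \<Rightarrow> real"
  assumes "isCont f p0" "e > 0"
  shows "\<exists>d>0. \<forall>p. dist p p0 < d \<longrightarrow> \<bar>f p - f p0\<bar> < e"
  using assms unfolding continuous_at_eps_delta dist_real_def by blast

lemma isCont_eps4:
  fixes f :: "real \<times> real \<times> real \<times> real \<Rightarrow> real"
  assumes "isCont f (a0, b0, c0, d0)" "e > 0"
  shows "\<exists>d>0. \<forall>a b c dd. \<bar>a - a0\<bar> < d \<and> \<bar>b - b0\<bar> < d \<and> \<bar>c - c0\<bar> < d \<and> \<bar>dd - d0\<bar> < d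
     \<longrightarrow> \<bar>f (a, b, c, dd) - f (a0, b0, c0, d0)\<bar> < e"
proof -
  obtain d where d: "d > 0" "\<And>p. dist p (a0, b0, c0, d0) < d \<Longrightarrow> \<bar>f p - f (a0, b0, c0, d0)\<bar> < e"
    using isCont_eps[OF assms] by blast
  show ?thesis
  proof (intro exI[of _ "d / 4"] conjI allI impI)
    show "d / 4 > 0" using d by simp
    fix a b c dd assume h: "\<bar>a - a0\<bar> < d / 4 \<and> \<bar>b - b0\<bar> < d / 4 \<and> \<bar>c - c0\<bar> < d / 4 \<and> \<bar>dd - d0\<bar> < d / 4"
    have "dist (a, b, c, dd) (a0, b0, c0, d0) \<le> dist a a0 + (dist b b0 + (dist c c0 + dist dd d0))"
      by (meson add_left_mono dist_pair_le order_trans)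
    also have "\<dots> < d" using h unfolding dist_real_def by linarith
    finally show "\<bar>f (a, b, c, dd) - f (a0, b0, c0, d0)\<bar> < e" using d by blast
  qed
qed

lemma continuity_part:
  fixes \<phi>r \<sigma> :: real and N :: nat
  assumes N: "N \<ge> 1" and \<sigma>: "\<sigma> > 0" and e: "\<epsilon> > 0"
  shows "\<exists>\<delta>>0. \<forall>A B Saa Sab. \<bar>A - \<phi>r\<bar> < \<delta> \<and> \<bar>B - \<phi>r\<bar> < \<delta> \<and> \<bar>Saa - (\<sigma> + \<phi>r\<^sup>2 + 1 / real N)\<bar> < \<delta>
      \<and> \<bar>Sab - (\<sigma> + \<phi>r\<^sup>2)\<bar> < \<delta> \<longrightarrow>
      Saa - A\<^sup>2 > 0 \<and> (Sab - A * B) / (Saa - A\<^sup>2) > 0 \<and> (Sab - A * B) / (Saa - A\<^sup>2) < 1 \<and>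
      \<bar>phistar A B Saa Sab - \<phi>r\<bar> < \<epsilon> \<and> \<bar>sstar N A B Saa Sab - \<sigma>\<bar> < \<epsilon>"
proof -
  define p0 where "p0 = (\<phi>r, \<phi>r, \<sigma> + \<phi>r\<^sup>2 + 1 / real N, \<sigma> + \<phi>r\<^sup>2)"
  have Np: "real N > 0" using N by simp
  define V where "V p = fst (snd (snd p)) - (fst p)\<^sup>2" for p :: "real \<times> real \<times> real \<times> real"
  define W where "W p = (snd (snd (snd p)) - fst p * fst (snd p)) / V p" for p :: "real \<times> real \<times> real \<times> real"
  define P where "P p = phistar (fst p) (fst (snd p)) (fst (snd (snd p))) (snd (snd (snd p)))" for p :: "real \<times> real \<times> real \<times> real"
  define Q where "Q p = sstar N (fst p) (fst (snd p)) (fst (snd (snd p))) (snd (snd (snd p)))" for p :: "real \<times> real \<times> real \<times> real"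
  have V0: "V p0 = \<sigma> + 1 / real N" unfolding V_def p0_def by (simp add: power2_eq_square)
  have V0p: "V p0 > 0" unfolding V0 using \<sigma> Np by (simp add: add_pos_pos)
  have W0: "W p0 = \<sigma> / (\<sigma> + 1 / real N)" unfolding W_def V0 unfolding p0_def by (simp add: power2_eq_square)
  have W0p: "0 < W p0" "W p0 < 1"
  proof -
    have i: "0 < 1 / real N" using Np by simp
    have j: "0 < \<sigma> + 1 / real N" using \<sigma> i by linarith
    show "0 < W p0" unfolding W0 using \<sigma> j by (intro divide_pos_pos)
    show "W p0 < 1" unfolding W0 using i j by (subst divide_less_eq_1_pos) auto
  qed
  have PW: "P p = (fst (snd p) - W p * fst p) / (1 - W p)" for p
    unfolding P_def phistar_def W_def V_def Let_def by simp
  have QW: "Q p = W p / (real N * (1 - W p))" for p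
    unfolding Q_def sstar_def W_def V_def Let_def by simp
  have P0: "P p0 = \<phi>r" unfolding PW using W0p by (simp add: p0_def field_simps)
  have Q0: "Q p0 = \<sigma>"
  proof -
    have k: "0 < 1 + \<sigma> * real N" using \<sigma> Np by (simp add: add_pos_pos)
    have "1 - W p0 = (1 / real N) / (\<sigma> + 1 / real N)" unfolding W0 using \<sigma> Np k by (simp add: field_simps)
    then have "real N * (1 - W p0) = 1 / (\<sigma> + 1 / real N)" using Np by simp
    moreover have j: "0 < \<sigma> + 1 / real N" using \<sigma> Np by (simp add: add_pos_pos)
    ultimately show ?thesis unfolding QW using j by (simp add: W0)
  qed
  have cV: "isCont V p0" unfolding V_def by (intro continuous_intros)
  have cW: "isCont W p0" unfolding W_def using V0p by (intro continuous_intros cV) auto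
  have cP: "isCont P p0" unfolding PW[abs_def] using W0p by (intro continuous_intros cW) auto
  have cQ: "isCont Q p0" unfolding QW[abs_def] using W0p Np by (intro continuous_intros cW) auto
  obtain d1 where d1: "d1 > 0" "\<And>a b c dd. \<bar>a - \<phi>r\<bar> < d1 \<and> \<bar>b - \<phi>r\<bar> < d1 \<and> \<bar>c - (\<sigma> + \<phi>r\<^sup>2 + 1 / real N)\<bar> < d1 \<and> \<bar>dd - (\<sigma> + \<phi>r\<^sup>2)\<bar> < d1
     \<Longrightarrow> \<bar>V (a, b, c, dd) - V p0\<bar> < V p0"
    using isCont_eps4[OF cV[unfolded p0_def] V0p[unfolded p0_def]] unfolding p0_def by blast
  obtain d2 where d2: "d2 > 0" "\<And>a b c dd. \<bar>a - \<phi>r\<bar> < d2 \<and> \<bar>b - \<phi>r\<bar> < d2 \<and> \<bar>c - (\<sigma> + \<phi>r\<^sup>2 + 1 / real N)\<bar> < d2 \<and> \<bar>dd - (\<sigma> + \<phi>r\<^sup>2)\<bar> < d2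
     \<Longrightarrow> \<bar>W (a, b, c, dd) - W p0\<bar> < min (W p0) (1 - W p0)"
    using isCont_eps4[OF cW[unfolded p0_def], of "min (W p0) (1 - W p0)"] W0p unfolding p0_def by auto
  obtain d3 where d3: "d3 > 0" "\<And>a b c dd. \<bar>a - \<phi>r\<bar> < d3 \<and> \<bar>b - \<phi>r\<bar> < d3 \<and> \<bar>c - (\<sigma> + \<phi>r\<^sup>2 + 1 / real N)\<bar> < d3 \<and> \<bar>dd - (\<sigma> + \<phi>r\<^sup>2)\<bar> < d3
     \<Longrightarrow> \<bar>P (a, b, c, dd) - P p0\<bar> < \<epsilon>"
    using isCont_eps4[OF cP[unfolded p0_def] e] unfolding p0_def by blast
  obtain d4 where d4: "d4 > 0" "\<And>a b c dd. \<bar>a - \<phi>r\<bar> < d4 \<and> \<bar>b - \<phi>r\<bar> < d4 \<and> \<bar>c - (\<sigma> + \<phi>r\<^sup>2 + 1 / real N)\<bar> < d4 \<and> \<bar>dd - (\<sigma> + \<phi>r\<^sup>2)\<bar> < d4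
     \<Longrightarrow> \<bar>Q (a, b, c, dd) - Q p0\<bar> < \<epsilon>"
    using isCont_eps4[OF cQ[unfolded p0_def] e] unfolding p0_def by blast
  show ?thesis
  proof (intro exI[of _ "min (min d1 d2) (min d3 d4)"] conjI allI impI)
    show "min (min d1 d2) (min d3 d4) > 0" using d1 d2 d3 d4 by simp
    fix A B Saa Sab
    assume h: "\<bar>A - \<phi>r\<bar> < min (min d1 d2) (min d3 d4) \<and> \<bar>B - \<phi>r\<bar> < min (min d1 d2) (min d3 d4) \<and>
       \<bar>Saa - (\<sigma> + \<phi>r\<^sup>2 + 1 / real N)\<bar> < min (min d1 d2) (min d3 d4) \<and> \<bar>Sab - (\<sigma> + \<phi>r\<^sup>2)\<bar> < min (min d1 d2) (min d3 d4)"
    have h1: "\<bar>V (A, B, Saa, Sab) - V p0\<bar> < V p0" using h by (intro d1(2)) auto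
    have h2: "\<bar>W (A, B, Saa, Sab) - W p0\<bar> < min (W p0) (1 - W p0)" using h by (intro d2(2)) auto
    have h3: "\<bar>P (A, B, Saa, Sab) - P p0\<bar> < \<epsilon>" using h by (intro d3(2)) auto
    have h4: "\<bar>Q (A, B, Saa, Sab) - Q p0\<bar> < \<epsilon>" using h by (intro d4(2)) auto
    show "Saa - A\<^sup>2 > 0" using h1 unfolding V_def by simp
    have "0 < W (A, B, Saa, Sab)" "W (A, B, Saa, Sab) < 1" using h2 by (auto simp: abs_less_iff)
    then show "(Sab - A * B) / (Saa - A\<^sup>2) > 0" "(Sab - A * B) / (Saa - A\<^sup>2) < 1" unfolding W_def V_def by simp_all
    show "\<bar>phistar A B Saa Sab - \<phi>r\<bar> < \<epsilon>" using h3 unfolding P0 unfolding P_def by simp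
    show "\<bar>sstar N A B Saa Sab - \<sigma>\<bar> < \<epsilon>" using h4 unfolding Q0 unfolding Q_def by simp
  qed
qed

lemma abs_mult_le_sq: "\<bar>a * b\<bar> \<le> a\<^sup>2 + (b::real)\<^sup>2"
proof -
  have "0 \<le> (\<bar>a\<bar> - \<bar>b\<bar>)\<^sup>2" by simp
  then have "2 * (\<bar>a\<bar> * \<bar>b\<bar>) \<le> a\<^sup>2 + b\<^sup>2" by (simp add: power2_eq_square algebra_simps)
  moreover have "0 \<le> \<bar>a\<bar> * \<bar>b\<bar>" by simp
  moreover have "\<bar>a * b\<bar> = \<bar>a\<bar> * \<bar>b\<bar>" by (simp add: abs_mult)
  ultimately show ?thesis by linarith
qed

lemma (in prob_space) integrable_prod_sq:
  fixes X Y :: "'a \<Rightarrow> real"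
  assumes [measurable]: "X \<in> borel_measurable M" "Y \<in> borel_measurable M"
    and "integrable M (\<lambda>\<omega>. (X \<omega>)\<^sup>2)" "integrable M (\<lambda>\<omega>. (Y \<omega>)\<^sup>2)"
  shows "integrable M (\<lambda>\<omega>. X \<omega> * Y \<omega>)"
proof (rule Bochner_Integration.integrable_bound[of _ "\<lambda>\<omega>. (X \<omega>)\<^sup>2 + (Y \<omega>)\<^sup>2"])
  show "integrable M (\<lambda>\<omega>. (X \<omega>)\<^sup>2 + (Y \<omega>)\<^sup>2)" using assms by simp
  show "(\<lambda>\<omega>. X \<omega> * Y \<omega>) \<in> borel_measurable M" by measurable
  show "AE \<omega> in M. norm (X \<omega> * Y \<omega>) \<le> norm ((X \<omega>)\<^sup>2 + (Y \<omega>)\<^sup>2)"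
    using abs_mult_le_sq by simp
qed

lemma (in prob_space) wlln:
  fixes Z :: "nat \<Rightarrow> 'a \<Rightarrow> real"
  assumes meas[measurable]: "\<And>t. Z t \<in> borel_measurable M"
    and int2: "\<And>t. integrable M (\<lambda>\<omega>. (Z t \<omega>)\<^sup>2)"
    and mean: "\<And>t. expectation (Z t) = \<mu>"
    and bnd: "\<And>t. expectation (\<lambda>\<omega>. (Z t \<omega>)\<^sup>2) \<le> c"
    and unc: "\<And>s t. s \<noteq> t \<Longrightarrow> expectation (\<lambda>\<omega>. Z s \<omega> * Z t \<omega>) = \<mu>\<^sup>2"
    and \<delta>: "\<delta> > 0"
  shows "(\<lambda>T. prob {\<omega> \<in> space M. \<bar>mean1 T (\<lambda>t. Z t \<omega>) - \<mu>\<bar> \<ge> \<delta>}) \<longlonglongrightarrow> 0"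
proof -
  have int1: "integrable M (Z t)" for t
    using square_integrable_imp_integrable[OF meas int2] .
  have intp: "integrable M (\<lambda>\<omega>. Z s \<omega> * Z t \<omega>)" for s t
    by (rule integrable_prod_sq) (auto intro: int2)
  define Y where "Y t \<omega> = Z t \<omega> - \<mu>" for t \<omega>
  have Ymeas[measurable]: "Y t \<in> borel_measurable M" for t unfolding Y_def by measurable
  have YY: "(\<lambda>\<omega>. Y s \<omega> * Y t \<omega>) = (\<lambda>\<omega>. Z s \<omega> * Z t \<omega> - \<mu> * Z s \<omega> - \<mu> * Z t \<omega> + \<mu>\<^sup>2)" for s t
    unfolding Y_def by (auto simp: algebra_simps power2_eq_square)
  have intYY: "integrable M (\<lambda>\<omega>. Y s \<omega> * Y t \<omega>)" for s t
    unfolding YY using intp int1 by simp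
  have EYY: "expectation (\<lambda>\<omega>. Y s \<omega> * Y t \<omega>) = (if s = t then expectation (\<lambda>\<omega>. (Z t \<omega>)\<^sup>2) - \<mu>\<^sup>2 else 0)" for s t
  proof -
    have "expectation (\<lambda>\<omega>. Y s \<omega> * Y t \<omega>) = expectation (\<lambda>\<omega>. Z s \<omega> * Z t \<omega>) - \<mu> * \<mu> - \<mu> * \<mu> + \<mu>\<^sup>2"
      unfolding YY using intp int1 mean by (simp add: prob_space)
    then show ?thesis using unc[of s t] by (auto simp: power2_eq_square)
  qed
  define K where "K = (c - \<mu>\<^sup>2) / \<delta>\<^sup>2"
  have bound: "prob {\<omega> \<in> space M. \<bar>mean1 T (\<lambda>t. Z t \<omega>) - \<mu>\<bar> \<ge> \<delta>} \<le> K * (1 / real T)" if T: "T > 0" for T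
  proof -
    have Tp: "real T > 0" using T by simp
    have set_eq: "{\<omega> \<in> space M. \<bar>mean1 T (\<lambda>t. Z t \<omega>) - \<mu>\<bar> \<ge> \<delta>} = {\<omega> \<in> space M. (\<Sum>t<T. Y t \<omega>)\<^sup>2 \<ge> (real T * \<delta>)\<^sup>2}"
    proof -
      have "mean1 T (\<lambda>t. Z t \<omega>) - \<mu> = (\<Sum>t<T. Y t \<omega>) / real T" for \<omega>
        unfolding mean1_def Y_def using Tp by (simp add: sum_subtractf field_simps)
      moreover have "\<bar>x / real T\<bar> \<ge> \<delta> \<longleftrightarrow> x\<^sup>2 \<ge> (real T * \<delta>)\<^sup>2" for x
      proof -
        have "\<bar>x / real T\<bar> \<ge> \<delta> \<longleftrightarrow> \<bar>real T * \<delta>\<bar> \<le> \<bar>x\<bar>" using Tp \<delta> by (simp add: field_simps abs_div)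
        also have "\<dots> \<longleftrightarrow> (real T * \<delta>)\<^sup>2 \<le> x\<^sup>2" by (rule abs_le_square_iff)
        finally show ?thesis .
      qed
      ultimately show ?thesis by simp
    qed
    have sq: "(\<Sum>t<T. Y t \<omega>)\<^sup>2 = (\<Sum>s<T. \<Sum>t<T. Y s \<omega> * Y t \<omega>)" for \<omega>
      by (simp add: power2_eq_square sum_product)
    have intu: "integrable M (\<lambda>\<omega>. (\<Sum>t<T. Y t \<omega>)\<^sup>2)"
      unfolding sq using intYY by simp
    have Eu: "expectation (\<lambda>\<omega>. (\<Sum>t<T. Y t \<omega>)\<^sup>2) = (\<Sum>t<T. expectation (\<lambda>\<omega>. (Z t \<omega>)\<^sup>2) - \<mu>\<^sup>2)"
      unfolding sq using intYY by (simp add: integral_sum EYY)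
    also have "\<dots> \<le> (\<Sum>t<T. c - \<mu>\<^sup>2)" using bnd by (intro sum_mono) (simp add: bnd)
    also have "\<dots> = real T * (c - \<mu>\<^sup>2)" by simp
    finally have Eu_le: "expectation (\<lambda>\<omega>. (\<Sum>t<T. Y t \<omega>)\<^sup>2) \<le> real T * (c - \<mu>\<^sup>2)" .
    have "prob {\<omega> \<in> space M. (\<Sum>t<T. Y t \<omega>)\<^sup>2 \<ge> (real T * \<delta>)\<^sup>2} \<le> expectation (\<lambda>\<omega>. (\<Sum>t<T. Y t \<omega>)\<^sup>2) / (real T * \<delta>)\<^sup>2"
      by (rule integral_Markov_inequality_measure[OF intu]) (use Tp \<delta> in auto)
    also have "\<dots> \<le> real T * (c - \<mu>\<^sup>2) / (real T * \<delta>)\<^sup>2"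
      using Eu_le Tp \<delta> by (intro divide_right_mono) auto
    also have "\<dots> = K * (1 / real T)" unfolding K_def using Tp \<delta> by (simp add: field_simps power2_eq_square)
    finally show ?thesis unfolding set_eq .
  qed
  show ?thesis
  proof (rule tendsto_sandwich[of "\<lambda>_. 0" _ _ "\<lambda>T. K * (1 / real T)"])
    show "\<forall>\<^sub>F n in sequentially. 0 \<le> prob {\<omega> \<in> space M. \<delta> \<le> \<bar>mean1 n (\<lambda>t. Z t \<omega>) - \<mu>\<bar>}" by simp
    show "\<forall>\<^sub>F n in sequentially. prob {\<omega> \<in> space M. \<delta> \<le> \<bar>mean1 n (\<lambda>t. Z t \<omega>) - \<mu>\<bar>} \<le> K * (1 / real n)"
      by (rule eventually_mono[OF eventually_gt_at_top[of 0]]) (rule bound)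
    show "(\<lambda>_. 0) \<longlonglongrightarrow> (0::real)" by simp
    show "(\<lambda>T. K * (1 / real T)) \<longlonglongrightarrow> 0" using tendsto_mult_right_zero[OF lim_inverse_n'] by simp
  qed
qed

locale model = prob_space M for M :: "'a measure" +
  fixes N K :: nat and \<phi>r \<sigma>r2 :: real
    and \<theta> :: "nat \<Rightarrow> 'a \<Rightarrow> real" and ex ey :: "nat \<Rightarrow> nat \<Rightarrow> 'a \<Rightarrow> real"
  assumes N1: "N \<ge> 1" and K1: "K \<ge> 1" and \<sigma>pos: "\<sigma>r2 > 0"
    and indep: "indep_vars (\<lambda>_. borel) (case_idx \<theta> ex ey) UNIV"
    and dist_theta: "\<And>t. distributed M lborel (\<theta> t) (normal_density \<phi>r (sqrt \<sigma>r2))"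
    and dist_ex: "\<And>t n. distributed M lborel (ex t n) (normal_density 0 1)"
    and dist_ey: "\<And>t k. distributed M lborel (ey t k) (normal_density 0 1)"
begin

abbreviation "P \<equiv> case_idx \<theta> ex ey"

definition m1 :: "idx \<Rightarrow> real" where "m1 i = (case i of Th _ \<Rightarrow> \<phi>r | _ \<Rightarrow> 0)"
definition v :: "idx \<Rightarrow> real" where "v i = (case i of Th _ \<Rightarrow> \<sigma>r2 | _ \<Rightarrow> 1)"
definition sd :: "idx \<Rightarrow> real" where "sd i = (case i of Th _ \<Rightarrow> sqrt \<sigma>r2 | _ \<Rightarrow> 1)"

lemma P_meas[measurable]: "P i \<in> borel_measurable M"
  using indep unfolding indep_vars_def by auto

lemma sd_pos: "sd i > 0" using \<sigma>pos by (cases i) (auto simp: sd_def)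
lemma v_sd: "v i = (sd i)\<^sup>2" using \<sigma>pos by (cases i) (auto simp: sd_def v_def)

lemma P_dist: "distributed M lborel (P i) (normal_density (m1 i) (sd i))"
  by (cases i) (auto simp: m1_def sd_def dist_theta dist_ex dist_ey)

lemma int_moment: "integrable M (\<lambda>\<omega>. (P i \<omega> - m1 i) ^ k)"
proof -
  have "integrable lborel (\<lambda>x. normal_density (m1 i) (sd i) x * (x - m1 i) ^ k)"
    using integrable_normal_moment[OF sd_pos] .
  then show ?thesis
    using distributed_integrable[OF P_dist, of "\<lambda>x. (x - m1 i) ^ k"] by simp
qed

lemma E_moment: "expectation (\<lambda>\<omega>. (P i \<omega> - m1 i) ^ k) = (\<integral>x. normal_density (m1 i) (sd i) x * (x - m1 i) ^ k \<partial>lborel)"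
  using distributed_integral[OF P_dist, of "\<lambda>x. (x - m1 i) ^ k"] by simp

lemma int_P: "integrable M (P i)"
proof -
  have "integrable M (\<lambda>\<omega>. (P i \<omega> - m1 i) ^ 1 + m1 i)"
    by (rule Bochner_Integration.integrable_add[OF int_moment integrable_const])
  then show ?thesis by simp
qed

lemma E_P: "expectation (P i) = m1 i"
  using normal_distributed_expectation[OF sd_pos P_dist] .

lemma int_P2: "integrable M (\<lambda>\<omega>. (P i \<omega>)\<^sup>2)"
proof -
  have eq: "(\<lambda>\<omega>. (P i \<omega>)\<^sup>2) = (\<lambda>\<omega>. (P i \<omega> - m1 i) ^ 2 + 2 * m1 i * P i \<omega> - (m1 i)\<^sup>2)"
    by (auto simp: power2_eq_square algebra_simps)
  show ?thesis unfolding eq using int_moment int_P by simp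
qed

lemma E_P2: "expectation (\<lambda>\<omega>. (P i \<omega>)\<^sup>2) = v i + (m1 i)\<^sup>2"
proof -
  have var: "expectation (\<lambda>\<omega>. (P i \<omega> - m1 i) ^ 2) = v i"
    using normal_distributed_variance[OF sd_pos P_dist] E_P v_sd by simp
  have eq: "(\<lambda>\<omega>. (P i \<omega>)\<^sup>2) = (\<lambda>\<omega>. (P i \<omega> - m1 i) ^ 2 + 2 * m1 i * P i \<omega> - (m1 i)\<^sup>2)"
    by (auto simp: power2_eq_square algebra_simps)
  have i1: "integrable M (\<lambda>\<omega>. (P i \<omega> - m1 i) ^ 2)" by (rule int_moment)
  have i2: "integrable M (\<lambda>\<omega>. 2 * m1 i * P i \<omega>)" using int_P by simp
  have "expectation (\<lambda>\<omega>. (P i \<omega> - m1 i) ^ 2 + 2 * m1 i * P i \<omega> - (m1 i)\<^sup>2) =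
      expectation (\<lambda>\<omega>. (P i \<omega> - m1 i) ^ 2) + expectation (\<lambda>\<omega>. 2 * m1 i * P i \<omega>) - (m1 i)\<^sup>2"
    using i1 i2 by (simp add: prob_space)
  also have "\<dots> = v i + (m1 i)\<^sup>2" using var E_P by (simp add: power2_eq_square)
  finally show ?thesis unfolding eq .
qed

lemma E_PP: "expectation (\<lambda>\<omega>. P i \<omega> * P j \<omega>) = m1 i * m1 j + (if i = j then v i else 0)"
  and int_PP: "integrable M (\<lambda>\<omega>. P i \<omega> * P j \<omega>)"
proof -
  have "expectation (\<lambda>\<omega>. P i \<omega> * P j \<omega>) = m1 i * m1 j + (if i = j then v i else 0) \<and> integrable M (\<lambda>\<omega>. P i \<omega> * P j \<omega>)"
  proof (cases "i = j")
    case True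
    then show ?thesis using E_P2[of i] int_P2[of i] by (simp add: power2_eq_square)
  next
    case False
    have ind: "indep_vars (\<lambda>_. borel) P {i, j}" by (rule indep_vars_subset[OF indep]) auto
    have "expectation (\<lambda>\<omega>. \<Prod>k\<in>{i, j}. P k \<omega>) = (\<Prod>k\<in>{i, j}. expectation (P k))"
      by (rule indep_vars_lebesgue_integral[OF _ ind]) (auto intro: int_P)
    moreover have "integrable M (\<lambda>\<omega>. \<Prod>k\<in>{i, j}. P k \<omega>)"
      by (rule indep_vars_integrable[OF _ ind]) (auto intro: int_P)
    ultimately show ?thesis using False by (simp add: E_P)
  qed
  then show "expectation (\<lambda>\<omega>. P i \<omega> * P j \<omega>) = m1 i * m1 j + (if i = j then v i else 0)"
    and "integrable M (\<lambda>\<omega>. P i \<omega> * P j \<omega>)" by auto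
qed

lemma E_lin:
  assumes "finite J"
  shows "expectation (\<lambda>\<omega>. \<Sum>i\<in>J. \<alpha> i * P i \<omega>) = (\<Sum>i\<in>J. \<alpha> i * m1 i)"
  using assms int_P by (simp add: integral_sum E_P)

lemma E_bilin:
  assumes J: "finite J" and J': "finite J'"
  shows "expectation (\<lambda>\<omega>. (\<Sum>i\<in>J. \<alpha> i * P i \<omega>) * (\<Sum>j\<in>J'. \<beta> j * P j \<omega>)) =
    (\<Sum>i\<in>J. \<alpha> i * m1 i) * (\<Sum>j\<in>J'. \<beta> j * m1 j) + (\<Sum>i\<in>J \<inter> J'. \<alpha> i * \<beta> i * v i)"
proof -
  have eq: "(\<lambda>\<omega>. (\<Sum>i\<in>J. \<alpha> i * P i \<omega>) * (\<Sum>j\<in>J'. \<beta> j * P j \<omega>)) = (\<lambda>\<omega>. \<Sum>i\<in>J. \<Sum>j\<in>J'. (\<alpha> i * \<beta> j) * (P i \<omega> * P j \<omega>))"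
    by (auto simp: sum_product algebra_simps)
  have "expectation (\<lambda>\<omega>. \<Sum>i\<in>J. \<Sum>j\<in>J'. (\<alpha> i * \<beta> j) * (P i \<omega> * P j \<omega>)) =
      (\<Sum>i\<in>J. \<Sum>j\<in>J'. (\<alpha> i * \<beta> j) * (m1 i * m1 j + (if i = j then v i else 0)))"
    using int_PP by (simp add: integral_sum E_PP)
  also have "\<dots> = (\<Sum>i\<in>J. \<Sum>j\<in>J'. (\<alpha> i * m1 i) * (\<beta> j * m1 j)) + (\<Sum>i\<in>J. \<Sum>j\<in>J'. (if i = j then \<alpha> i * \<beta> i * v i else 0))"
    by (simp add: sum.distrib[symmetric] algebra_simps if_distrib cong: if_cong)
  also have "(\<Sum>i\<in>J. \<Sum>j\<in>J'. (if i = j then \<alpha> i * \<beta> i * v i else 0)) = (\<Sum>i\<in>J \<inter> J'. \<alpha> i * \<beta> i * v i)"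
    using J J' by (simp add: sum.inter_restrict)
  finally show ?thesis unfolding eq by (simp add: sum_product)
qed

definition wt :: "idx \<Rightarrow> real" where
  "wt i = (case i of Th _ \<Rightarrow> 1 | Ex _ _ \<Rightarrow> 1 / real N | Ey _ _ \<Rightarrow> 1 / real K)"
definition Jx :: "nat \<Rightarrow> idx set" where "Jx t = insert (Th t) (Ex t ` {..<N})"
definition Jy :: "nat \<Rightarrow> idx set" where "Jy t = insert (Th t) (Ey t ` {..<K})"
definition abar :: "nat \<Rightarrow> 'a \<Rightarrow> real" where "abar t \<omega> = (\<Sum>i\<in>Jx t. wt i * P i \<omega>)"
definition bbar :: "nat \<Rightarrow> 'a \<Rightarrow> real" where "bbar t \<omega> = (\<Sum>i\<in>Jy t. wt i * P i \<omega>)"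

lemma finite_Jx[simp]: "finite (Jx t)" and finite_Jy[simp]: "finite (Jy t)"
  unfolding Jx_def Jy_def by auto

lemma sum_Jx: "(\<Sum>i\<in>Jx t. f i) = f (Th t) + (\<Sum>n<N. f (Ex t n))"
proof -
  have "Th t \<notin> Ex t ` {..<N}" by auto
  moreover have "inj_on (Ex t) {..<N}" by (auto simp: inj_on_def)
  ultimately show ?thesis unfolding Jx_def by (simp add: sum.reindex)
qed

lemma sum_Jy: "(\<Sum>i\<in>Jy t. f i) = f (Th t) + (\<Sum>k<K. f (Ey t k))"
proof -
  have "Th t \<notin> Ey t ` {..<K}" by auto
  moreover have "inj_on (Ey t) {..<K}" by (auto simp: inj_on_def)
  ultimately show ?thesis unfolding Jy_def by (simp add: sum.reindex)
qed

lemma abar_eq: "abar t \<omega> = \<theta> t \<omega> + (\<Sum>n<N. ex t n \<omega>) / real N"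
  unfolding abar_def sum_Jx by (simp add: wt_def sum_divide_distrib)

lemma bbar_eq: "bbar t \<omega> = \<theta> t \<omega> + (\<Sum>k<K. ey t k \<omega>) / real K"
  unfolding bbar_def sum_Jy by (simp add: wt_def sum_divide_distrib)

lemma abar_meas[measurable]: "abar t \<in> borel_measurable M" unfolding abar_def by measurable
lemma bbar_meas[measurable]: "bbar t \<in> borel_measurable M" unfolding bbar_def by measurable

lemma E_abar: "expectation (abar t) = \<phi>r"
  unfolding abar_def[abs_def] by (simp only: E_lin[OF finite_Jx]) (simp add: sum_Jx m1_def wt_def)
lemma E_bbar: "expectation (bbar t) = \<phi>r"
  unfolding bbar_def[abs_def] by (simp only: E_lin[OF finite_Jy]) (simp add: sum_Jy m1_def wt_def)

lemma E_abar2: "expectation (\<lambda>\<omega>. (abar t \<omega>)\<^sup>2) = \<sigma>r2 + \<phi>r\<^sup>2 + 1 / real N"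
proof -
  have "expectation (\<lambda>\<omega>. (abar t \<omega>)\<^sup>2) = expectation (\<lambda>\<omega>. abar t \<omega> * abar t \<omega>)"
    by (simp add: power2_eq_square)
  also have "\<dots> = \<phi>r * \<phi>r + (\<sigma>r2 + real N * (1 / real N * (1 / real N)))"
    unfolding abar_def by (simp only: E_bilin[OF finite_Jx finite_Jx]) (simp add: sum_Jx m1_def wt_def v_def)
  also have "\<dots> = \<sigma>r2 + \<phi>r\<^sup>2 + 1 / real N" using N1 by (simp add: power2_eq_square)
  finally show ?thesis .
qed

lemma Jx_Jy: "Jx t \<inter> Jy t = {Th t}" unfolding Jx_def Jy_def by auto

lemma E_abbar: "expectation (\<lambda>\<omega>. abar t \<omega> * bbar t \<omega>) = \<sigma>r2 + \<phi>r\<^sup>2"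
proof -
  have "expectation (\<lambda>\<omega>. abar t \<omega> * bbar t \<omega>) = \<phi>r * \<phi>r + \<sigma>r2"
    unfolding abar_def bbar_def by (simp only: E_bilin[OF finite_Jx finite_Jy]) (simp add: sum_Jx sum_Jy Jx_Jy m1_def wt_def v_def)
  then show ?thesis by (simp add: power2_eq_square)
qed

end

lemma pow4_add: "(u + v) ^ 4 \<le> 8 * (u ^ 4 + (v::real) ^ 4)"
proof -
  have a: "(u + v)\<^sup>2 \<le> 2 * (u\<^sup>2 + v\<^sup>2)"
    using zero_le_power2[of "u - v"] by (simp add: power2_eq_square algebra_simps)
  have "(u + v) ^ 4 = ((u + v)\<^sup>2)\<^sup>2" by simp
  also have "\<dots> \<le> (2 * (u\<^sup>2 + v\<^sup>2))\<^sup>2" by (rule power_mono[OF a]) simp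
  also have "\<dots> \<le> 8 * (u ^ 4 + v ^ 4)"
    using zero_le_power2[of "u\<^sup>2 - v\<^sup>2"] by (simp add: power2_eq_square algebra_simps power4_eq_xxxx)
  finally show ?thesis .
qed

lemma sum_pow4:
  fixes p :: "'i \<Rightarrow> real"
  assumes "finite J"
  shows "(\<Sum>i\<in>J. \<bar>p i\<bar>) ^ 4 \<le> 8 ^ card J * (\<Sum>i\<in>J. (p i) ^ 4)"
  using assms
proof (induction J rule: finite_induct)
  case empty then show ?case by simp
next
  case (insert a F)
  have S0: "0 \<le> (\<Sum>i\<in>F. (p i) ^ 4)" by (intro sum_nonneg) simp
  have "(\<Sum>i\<in>insert a F. \<bar>p i\<bar>) ^ 4 = (\<bar>p a\<bar> + (\<Sum>i\<in>F. \<bar>p i\<bar>)) ^ 4" using insert by simp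
  also have "\<dots> \<le> 8 * (\<bar>p a\<bar> ^ 4 + (\<Sum>i\<in>F. \<bar>p i\<bar>) ^ 4)" by (rule pow4_add)
  also have "\<dots> \<le> 8 * ((p a) ^ 4 + 8 ^ card F * (\<Sum>i\<in>F. (p i) ^ 4))"
    using insert.IH by (simp add: power_even_abs_numeral)
  also have "\<dots> \<le> 8 * (8 ^ card F * (p a) ^ 4 + 8 ^ card F * (\<Sum>i\<in>F. (p i) ^ 4))"
  proof -
    have "(p a) ^ 4 \<le> 8 ^ card F * (p a) ^ 4"
      using mult_right_mono[of 1 "8 ^ card F" "(p a) ^ 4"] by simp
    then show ?thesis by simp
  qed
  also have "\<dots> = 8 ^ card (insert a F) * (\<Sum>i\<in>insert a F. (p i) ^ 4)"
    using insert by (simp add: algebra_simps)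
  finally show ?case .
qed

lemma lin_pow4:
  fixes p \<alpha> :: "'i \<Rightarrow> real"
  assumes "finite J" "\<And>i. \<bar>\<alpha> i\<bar> \<le> 1"
  shows "(\<Sum>i\<in>J. \<alpha> i * p i) ^ 4 \<le> 8 ^ card J * (\<Sum>i\<in>J. (p i) ^ 4)"
proof -
  have "\<bar>\<Sum>i\<in>J. \<alpha> i * p i\<bar> \<le> (\<Sum>i\<in>J. \<bar>\<alpha> i * p i\<bar>)" by (rule sum_abs)
  also have "\<dots> \<le> (\<Sum>i\<in>J. \<bar>p i\<bar>)"
    using assms(2) by (intro sum_mono) (simp add: abs_mult mult_left_le_one_le)
  finally have "\<bar>\<Sum>i\<in>J. \<alpha> i * p i\<bar> ^ 4 \<le> (\<Sum>i\<in>J. \<bar>p i\<bar>) ^ 4" by (rule power_mono) simp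
  then have "(\<Sum>i\<in>J. \<alpha> i * p i) ^ 4 \<le> (\<Sum>i\<in>J. \<bar>p i\<bar>) ^ 4" by (simp add: power_even_abs_numeral)
  also have "\<dots> \<le> 8 ^ card J * (\<Sum>i\<in>J. (p i) ^ 4)" by (rule sum_pow4[OF assms(1)])
  finally show ?thesis .
qed

context model
begin

definition c4 :: "idx \<Rightarrow> real" where
  "c4 i = (\<integral>x. normal_density (m1 i) (sd i) x * (x - m1 i) ^ 4 \<partial>lborel)"

definition Q0 :: real where
  "Q0 = 8 * (c4 (Th 0) + c4 (Ex 0 0)) + 8 * \<phi>r ^ 4"

lemma c4_nonneg: "c4 i \<ge> 0"
  unfolding c4_def by (intro integral_nonneg_AE) (simp add: zero_le_even_power)

lemma c4_le: "c4 i \<le> c4 (Th 0) + c4 (Ex 0 0)"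
proof (cases i)
  case (Th t) then show ?thesis using c4_nonneg[of "Ex 0 0"] by (simp add: c4_def m1_def sd_def)
next
  case (Ex t n) then show ?thesis using c4_nonneg[of "Th 0"] by (simp add: c4_def m1_def sd_def)
next
  case (Ey t k) then show ?thesis using c4_nonneg[of "Th 0"] by (simp add: c4_def m1_def sd_def)
qed

lemma P4_bound: "(P i \<omega>) ^ 4 \<le> 8 * (P i \<omega> - m1 i) ^ 4 + 8 * (m1 i) ^ 4"
  using pow4_add[of "P i \<omega> - m1 i" "m1 i"] by simp

lemma int_P4: "integrable M (\<lambda>\<omega>. (P i \<omega>) ^ 4)"
proof (rule Bochner_Integration.integrable_bound[of _ "\<lambda>\<omega>. 8 * (P i \<omega> - m1 i) ^ 4 + 8 * (m1 i) ^ 4"])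
  show "integrable M (\<lambda>\<omega>. 8 * (P i \<omega> - m1 i) ^ 4 + 8 * (m1 i) ^ 4)"
    using int_moment[of i 4] by simp
  show "(\<lambda>\<omega>. (P i \<omega>) ^ 4) \<in> borel_measurable M" by measurable
  show "AE \<omega> in M. norm ((P i \<omega>) ^ 4) \<le> norm (8 * (P i \<omega> - m1 i) ^ 4 + 8 * (m1 i) ^ 4)"
    using P4_bound by (simp add: zero_le_even_power)
qed

lemma E_P4: "expectation (\<lambda>\<omega>. (P i \<omega>) ^ 4) \<le> Q0"
proof -
  have "expectation (\<lambda>\<omega>. (P i \<omega>) ^ 4) \<le> expectation (\<lambda>\<omega>. 8 * (P i \<omega> - m1 i) ^ 4 + 8 * (m1 i) ^ 4)"
    using int_P4 int_moment[of i 4] P4_bound by (intro integral_mono) auto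
  also have "\<dots> = 8 * c4 i + 8 * (m1 i) ^ 4"
    using int_moment[of i 4] E_moment[of i 4] by (simp add: prob_space c4_def)
  also have "\<dots> \<le> Q0"
  proof -
    have "(m1 i) ^ 4 \<le> \<phi>r ^ 4" by (cases i) (auto simp: m1_def zero_le_even_power)
    then show ?thesis unfolding Q0_def using c4_le[of i] by simp
  qed
  finally show ?thesis .
qed

lemma wt_le1: "\<bar>wt i\<bar> \<le> 1"
  using N1 K1 by (cases i) (auto simp: wt_def)

lemma card_Jx: "card (Jx t) = Suc N"
proof -
  have "Th t \<notin> Ex t ` {..<N}" by auto
  moreover have "inj_on (Ex t) {..<N}" by (auto simp: inj_on_def)
  ultimately show ?thesis unfolding Jx_def by (simp add: card_image)
qed

lemma card_Jy: "card (Jy t) = Suc K"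
proof -
  have "Th t \<notin> Ey t ` {..<K}" by auto
  moreover have "inj_on (Ey t) {..<K}" by (auto simp: inj_on_def)
  ultimately show ?thesis unfolding Jy_def by (simp add: card_image)
qed

definition Bx :: real where "Bx = 8 ^ Suc N * (real (Suc N) * Q0)"
definition By :: real where "By = 8 ^ Suc K * (real (Suc K) * Q0)"

lemma abar4: "integrable M (\<lambda>\<omega>. (abar t \<omega>) ^ 4)" "expectation (\<lambda>\<omega>. (abar t \<omega>) ^ 4) \<le> Bx"
proof -
  have b: "(abar t \<omega>) ^ 4 \<le> 8 ^ Suc N * (\<Sum>i\<in>Jx t. (P i \<omega>) ^ 4)" for \<omega>
    unfolding abar_def using lin_pow4[OF finite_Jx[of t] wt_le1, where p="\<lambda>i. P i \<omega>"] card_Jx by simp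
  have ib: "integrable M (\<lambda>\<omega>. 8 ^ Suc N * (\<Sum>i\<in>Jx t. (P i \<omega>) ^ 4))" using int_P4 by simp
  show i: "integrable M (\<lambda>\<omega>. (abar t \<omega>) ^ 4)"
  proof (rule Bochner_Integration.integrable_bound[OF ib])
    show "(\<lambda>\<omega>. (abar t \<omega>) ^ 4) \<in> borel_measurable M" by measurable
    show "AE \<omega> in M. norm ((abar t \<omega>) ^ 4) \<le> norm (8 ^ Suc N * (\<Sum>i\<in>Jx t. (P i \<omega>) ^ 4))"
    proof (rule AE_I2)
      fix \<omega>
      have "0 \<le> (abar t \<omega>) ^ 4" by (simp add: zero_le_even_power)
      moreover have "0 \<le> 8 ^ Suc N * (\<Sum>i\<in>Jx t. (P i \<omega>) ^ 4)"
        by (intro mult_nonneg_nonneg sum_nonneg) (auto simp: zero_le_even_power)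
      ultimately show "norm ((abar t \<omega>) ^ 4) \<le> norm (8 ^ Suc N * (\<Sum>i\<in>Jx t. (P i \<omega>) ^ 4))"
        using b[of \<omega>] by (simp only: real_norm_def abs_of_nonneg)
    qed
  qed
  have "expectation (\<lambda>\<omega>. (abar t \<omega>) ^ 4) \<le> expectation (\<lambda>\<omega>. 8 ^ Suc N * (\<Sum>i\<in>Jx t. (P i \<omega>) ^ 4))"
    using i ib b by (intro integral_mono) auto
  also have "\<dots> = 8 ^ Suc N * (\<Sum>i\<in>Jx t. expectation (\<lambda>\<omega>. (P i \<omega>) ^ 4))"
    using int_P4 by (simp add: integral_sum)
  also have "\<dots> \<le> 8 ^ Suc N * (\<Sum>i\<in>Jx t. Q0)"
    using E_P4 by (intro mult_left_mono sum_mono) auto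
  also have "\<dots> = Bx" unfolding Bx_def using card_Jx by simp
  finally show "expectation (\<lambda>\<omega>. (abar t \<omega>) ^ 4) \<le> Bx" .
qed

lemma bbar4: "integrable M (\<lambda>\<omega>. (bbar t \<omega>) ^ 4)" "expectation (\<lambda>\<omega>. (bbar t \<omega>) ^ 4) \<le> By"
proof -
  have b: "(bbar t \<omega>) ^ 4 \<le> 8 ^ Suc K * (\<Sum>i\<in>Jy t. (P i \<omega>) ^ 4)" for \<omega>
    unfolding bbar_def using lin_pow4[OF finite_Jy[of t] wt_le1, where p="\<lambda>i. P i \<omega>"] card_Jy by simp
  have ib: "integrable M (\<lambda>\<omega>. 8 ^ Suc K * (\<Sum>i\<in>Jy t. (P i \<omega>) ^ 4))" using int_P4 by simp
  show i: "integrable M (\<lambda>\<omega>. (bbar t \<omega>) ^ 4)"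
  proof (rule Bochner_Integration.integrable_bound[OF ib])
    show "(\<lambda>\<omega>. (bbar t \<omega>) ^ 4) \<in> borel_measurable M" by measurable
    show "AE \<omega> in M. norm ((bbar t \<omega>) ^ 4) \<le> norm (8 ^ Suc K * (\<Sum>i\<in>Jy t. (P i \<omega>) ^ 4))"
    proof (rule AE_I2)
      fix \<omega>
      have "0 \<le> (bbar t \<omega>) ^ 4" by (simp add: zero_le_even_power)
      moreover have "0 \<le> 8 ^ Suc K * (\<Sum>i\<in>Jy t. (P i \<omega>) ^ 4)"
        by (intro mult_nonneg_nonneg sum_nonneg) (auto simp: zero_le_even_power)
      ultimately show "norm ((bbar t \<omega>) ^ 4) \<le> norm (8 ^ Suc K * (\<Sum>i\<in>Jy t. (P i \<omega>) ^ 4))"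
        using b[of \<omega>] by (simp only: real_norm_def abs_of_nonneg)
    qed
  qed
  have "expectation (\<lambda>\<omega>. (bbar t \<omega>) ^ 4) \<le> expectation (\<lambda>\<omega>. 8 ^ Suc K * (\<Sum>i\<in>Jy t. (P i \<omega>) ^ 4))"
    using i ib b by (intro integral_mono) auto
  also have "\<dots> = 8 ^ Suc K * (\<Sum>i\<in>Jy t. expectation (\<lambda>\<omega>. (P i \<omega>) ^ 4))"
    using int_P4 by (simp add: integral_sum)
  also have "\<dots> \<le> 8 ^ Suc K * (\<Sum>i\<in>Jy t. Q0)"
    using E_P4 by (intro mult_left_mono sum_mono) auto
  also have "\<dots> = By" unfolding By_def using card_Jy by simp
  finally show "expectation (\<lambda>\<omega>. (bbar t \<omega>) ^ 4) \<le> By" .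
qed

end

context model
begin

definition tix :: "idx \<Rightarrow> nat" where "tix i = (case i of Th t \<Rightarrow> t | Ex t _ \<Rightarrow> t | Ey t _ \<Rightarrow> t)"
definition I :: "nat \<Rightarrow> idx set" where "I t = {i. tix i = t}"

lemma indep_groups: "indep_vars (\<lambda>t. PiM (I t) (\<lambda>_. borel)) (\<lambda>t \<omega>. restrict (\<lambda>i. P i \<omega>) (I t)) UNIV"
  by (rule indep_vars_restrict[OF indep]) (auto simp: disjoint_family_on_def I_def)

lemma indep_Z:
  fixes Z :: "nat \<Rightarrow> 'a \<Rightarrow> real"
  assumes H: "\<And>t. H t \<in> borel_measurable (PiM (I t) (\<lambda>_. borel))"
    and Z: "\<And>t \<omega>. Z t \<omega> = H t (restrict (\<lambda>i. P i \<omega>) (I t))"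
    and int: "\<And>t. integrable M (Z t)"
    and st: "s \<noteq> t"
  shows "expectation (\<lambda>\<omega>. Z s \<omega> * Z t \<omega>) = expectation (Z s) * expectation (Z t)"
proof -
  have Zeq: "Z = (\<lambda>t \<omega>. H t (restrict (\<lambda>i. P i \<omega>) (I t)))" using Z by (intro ext) auto
  have "indep_vars (\<lambda>_. borel) (\<lambda>t \<omega>. H t (restrict (\<lambda>i. P i \<omega>) (I t))) UNIV"
    by (rule indep_vars_compose2[OF indep_groups H])
  then have ind: "indep_vars (\<lambda>_. borel) Z {s, t}" unfolding Zeq[symmetric]
    by (rule indep_vars_subset) auto
  have "expectation (\<lambda>\<omega>. \<Prod>k\<in>{s, t}. Z k \<omega>) = (\<Prod>k\<in>{s, t}. expectation (Z k))"
    by (rule indep_vars_lebesgue_integral[OF _ ind]) (auto intro: int)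
  then show ?thesis using st by simp
qed

definition La :: "nat \<Rightarrow> (idx \<Rightarrow> real) \<Rightarrow> real" where "La t g = (\<Sum>i\<in>Jx t. wt i * g i)"
definition Lb :: "nat \<Rightarrow> (idx \<Rightarrow> real) \<Rightarrow> real" where "Lb t g = (\<Sum>i\<in>Jy t. wt i * g i)"

lemma Jx_I: "Jx t \<subseteq> I t" unfolding Jx_def I_def tix_def by auto
lemma Jy_I: "Jy t \<subseteq> I t" unfolding Jy_def I_def tix_def by auto

lemma La_meas[measurable]: "La t \<in> borel_measurable (PiM (I t) (\<lambda>_. borel))"
  unfolding La_def
proof (intro borel_measurable_sum borel_measurable_times borel_measurable_const)
  fix i assume "i \<in> Jx t"
  then have "i \<in> I t" using Jx_I by auto
  then show "(\<lambda>g. g i) \<in> borel_measurable (PiM (I t) (\<lambda>_. borel))"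
    by (rule measurable_component_singleton)
qed

lemma Lb_meas[measurable]: "Lb t \<in> borel_measurable (PiM (I t) (\<lambda>_. borel))"
  unfolding Lb_def
proof (intro borel_measurable_sum borel_measurable_times borel_measurable_const)
  fix i assume "i \<in> Jy t"
  then have "i \<in> I t" using Jy_I by auto
  then show "(\<lambda>g. g i) \<in> borel_measurable (PiM (I t) (\<lambda>_. borel))"
    by (rule measurable_component_singleton)
qed

lemma La_eq: "La t (restrict (\<lambda>i. P i \<omega>) (I t)) = abar t \<omega>"
  unfolding La_def abar_def using Jx_I by (intro sum.cong refl) auto

lemma Lb_eq: "Lb t (restrict (\<lambda>i. P i \<omega>) (I t)) = bbar t \<omega>"
  unfolding Lb_def bbar_def using Jy_I by (intro sum.cong refl) auto

end

lemma sq_le_4: "(u::real)\<^sup>2 \<le> 1 + u ^ 4 + v ^ 4"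
proof -
  have "0 \<le> (u\<^sup>2 - 1)\<^sup>2" by simp
  then have "2 * u\<^sup>2 \<le> u ^ 4 + 1" by (simp add: power2_eq_square power4_eq_xxxx algebra_simps)
  moreover have "0 \<le> v ^ 4" "0 \<le> u\<^sup>2" by (simp_all add: zero_le_even_power)
  ultimately show ?thesis by linarith
qed

lemma prod_sq_le_4: "((u::real) * v)\<^sup>2 \<le> 1 + u ^ 4 + v ^ 4"
proof -
  have "0 \<le> (u\<^sup>2 - v\<^sup>2)\<^sup>2" by simp
  then have "2 * (u * v)\<^sup>2 \<le> u ^ 4 + v ^ 4" by (simp add: power2_eq_square power4_eq_xxxx algebra_simps)
  moreover have "0 \<le> (u * v)\<^sup>2" by simp
  ultimately show ?thesis by linarith
qed

context model
begin

lemma conv_Z: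
  fixes h :: "real \<Rightarrow> real \<Rightarrow> real"
  assumes hm: "\<And>t. (\<lambda>g. h (La t g) (Lb t g)) \<in> borel_measurable (PiM (I t) (\<lambda>_. borel))"
    and hZm: "\<And>t. (\<lambda>\<omega>. h (abar t \<omega>) (bbar t \<omega>)) \<in> borel_measurable M"
    and hb: "\<And>u v. (h u v)\<^sup>2 \<le> 1 + u ^ 4 + v ^ 4"
    and hE: "\<And>t. expectation (\<lambda>\<omega>. h (abar t \<omega>) (bbar t \<omega>)) = \<mu>"
    and \<delta>: "\<delta> > 0"
  shows "(\<lambda>T. prob {\<omega> \<in> space M. \<bar>mean1 T (\<lambda>t. h (abar t \<omega>) (bbar t \<omega>)) - \<mu>\<bar> \<ge> \<delta>}) \<longlonglongrightarrow> 0"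
proof (rule wlln[where c = "1 + Bx + By"])
  let ?Z = "\<lambda>t \<omega>. h (abar t \<omega>) (bbar t \<omega>)"
  show m: "\<And>t. ?Z t \<in> borel_measurable M" by (rule hZm)
  have ib: "integrable M (\<lambda>\<omega>. 1 + (abar t \<omega>) ^ 4 + (bbar t \<omega>) ^ 4)" for t
    using abar4(1)[of t] bbar4(1)[of t] by simp
  have nb: "norm ((?Z t \<omega>)\<^sup>2) \<le> norm (1 + (abar t \<omega>) ^ 4 + (bbar t \<omega>) ^ 4)" for t \<omega>
  proof -
    have "0 \<le> (abar t \<omega>) ^ 4" "0 \<le> (bbar t \<omega>) ^ 4" by (simp_all add: zero_le_even_power)
    then show ?thesis using hb[of "abar t \<omega>" "bbar t \<omega>"] by simp
  qed
  show i2: "\<And>t. integrable M (\<lambda>\<omega>. (?Z t \<omega>)\<^sup>2)"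
  proof -
    fix t
    show "integrable M (\<lambda>\<omega>. (?Z t \<omega>)\<^sup>2)"
      by (rule Bochner_Integration.integrable_bound[OF ib]) (use hZm[of t] nb in auto)
  qed
  show "\<And>t. expectation (?Z t) = \<mu>" by (rule hE)
  show "\<And>t. expectation (\<lambda>\<omega>. (?Z t \<omega>)\<^sup>2) \<le> 1 + Bx + By"
  proof -
    fix t
    have "expectation (\<lambda>\<omega>. (?Z t \<omega>)\<^sup>2) \<le> expectation (\<lambda>\<omega>. 1 + (abar t \<omega>) ^ 4 + (bbar t \<omega>) ^ 4)"
      using i2[of t] ib[of t] hb by (intro integral_mono) auto
    also have "\<dots> = 1 + expectation (\<lambda>\<omega>. (abar t \<omega>) ^ 4) + expectation (\<lambda>\<omega>. (bbar t \<omega>) ^ 4)"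
      using abar4(1)[of t] bbar4(1)[of t] by (simp add: prob_space)
    also have "\<dots> \<le> 1 + Bx + By" using abar4(2)[of t] bbar4(2)[of t] by simp
    finally show "expectation (\<lambda>\<omega>. (?Z t \<omega>)\<^sup>2) \<le> 1 + Bx + By" .
  qed
  show "\<And>s t. s \<noteq> t \<Longrightarrow> expectation (\<lambda>\<omega>. ?Z s \<omega> * ?Z t \<omega>) = \<mu>\<^sup>2"
  proof -
    fix s t :: nat assume st: "s \<noteq> t"
    have int: "integrable M (?Z t)" for t
      by (rule square_integrable_imp_integrable[OF hZm i2])
    have "expectation (\<lambda>\<omega>. ?Z s \<omega> * ?Z t \<omega>) = expectation (?Z s) * expectation (?Z t)"
      by (rule indep_Z[where H = "\<lambda>t g. h (La t g) (Lb t g)", OF hm _ int st]) (simp add: La_eq Lb_eq)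
    then show "expectation (\<lambda>\<omega>. ?Z s \<omega> * ?Z t \<omega>) = \<mu>\<^sup>2" using hE by (simp add: power2_eq_square)
  qed
  show "\<delta> > 0" by (rule \<delta>)
qed

lemma conv_A: "\<delta> > 0 \<Longrightarrow> (\<lambda>T. prob {\<omega> \<in> space M. \<bar>mean1 T (\<lambda>t. abar t \<omega>) - \<phi>r\<bar> \<ge> \<delta>}) \<longlonglongrightarrow> 0"
  using conv_Z[where h = "\<lambda>u v. u" and \<mu> = \<phi>r] sq_le_4 E_abar by simp

lemma conv_B: "\<delta> > 0 \<Longrightarrow> (\<lambda>T. prob {\<omega> \<in> space M. \<bar>mean1 T (\<lambda>t. bbar t \<omega>) - \<phi>r\<bar> \<ge> \<delta>}) \<longlonglongrightarrow> 0"
proof (rule conv_Z[where h = "\<lambda>u v. v"])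
  show "\<And>u v. (v::real)\<^sup>2 \<le> 1 + u ^ 4 + v ^ 4"
  proof -
    fix u v :: real show "v\<^sup>2 \<le> 1 + u ^ 4 + v ^ 4" using sq_le_4[of v u] by linarith
  qed
qed (auto simp: E_bbar)

lemma conv_AA: "\<delta> > 0 \<Longrightarrow> (\<lambda>T. prob {\<omega> \<in> space M. \<bar>mean1 T (\<lambda>t. (abar t \<omega>)\<^sup>2) - (\<sigma>r2 + \<phi>r\<^sup>2 + 1 / real N)\<bar> \<ge> \<delta>}) \<longlonglongrightarrow> 0"
proof (rule conv_Z[where h = "\<lambda>u v. u\<^sup>2"])
  show "\<And>u v. ((u::real)\<^sup>2)\<^sup>2 \<le> 1 + u ^ 4 + v ^ 4"
  proof -
    fix u v :: real
    have "0 \<le> v ^ 4" by (simp add: zero_le_even_power)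
    moreover have "(u\<^sup>2)\<^sup>2 = u ^ 4" by simp
    ultimately show "(u\<^sup>2)\<^sup>2 \<le> 1 + u ^ 4 + v ^ 4" by linarith
  qed
qed (auto simp: E_abar2)

lemma conv_AB: "\<delta> > 0 \<Longrightarrow> (\<lambda>T. prob {\<omega> \<in> space M. \<bar>mean1 T (\<lambda>t. abar t \<omega> * bbar t \<omega>) - (\<sigma>r2 + \<phi>r\<^sup>2)\<bar> \<ge> \<delta>}) \<longlonglongrightarrow> 0"
  by (rule conv_Z[where h = "\<lambda>u v. u * v"]) (auto simp: E_abbar prod_sq_le_4)

end

lemma mean1_meas[measurable]:
  fixes f :: "nat \<Rightarrow> 'a \<Rightarrow> real"
  assumes [measurable]: "\<And>t. f t \<in> borel_measurable M"
  shows "(\<lambda>\<omega>. mean1 T (\<lambda>t. f t \<omega>)) \<in> borel_measurable M"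
  unfolding mean1_def by measurable

context model
begin

lemma main:
  fixes x y :: "nat \<Rightarrow> nat \<Rightarrow> 'a \<Rightarrow> real" and \<phi>hat \<sigma>hat2 :: "nat \<Rightarrow> 'a \<Rightarrow> real"
  assumes x_def: "\<And>t n \<omega>. \<omega> \<in> space M \<Longrightarrow> x t n \<omega> = \<theta> t \<omega> + ex t n \<omega>"
    and y_def: "\<And>t k \<omega>. \<omega> \<in> space M \<Longrightarrow> y t k \<omega> = \<theta> t \<omega> + ey t k \<omega>"
    and meas_phi[measurable]: "\<And>T. \<phi>hat T \<in> borel_measurable M"
    and meas_sigma[measurable]: "\<And>T. \<sigma>hat2 T \<in> borel_measurable M"
    and solves: "\<And>T \<omega>. \<omega> \<in> space M \<Longrightarrow>
        (\<exists>\<phi> s. PLL_stationary N K T (\<lambda>t n. x t n \<omega>) (\<lambda>t k. y t k \<omega>) \<phi> s) \<Longrightarrow>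
        PLL_stationary N K T (\<lambda>t n. x t n \<omega>) (\<lambda>t k. y t k \<omega>) (\<phi>hat T \<omega>) (\<sigma>hat2 T \<omega>)"
  shows "\<forall>\<epsilon>>0.
      (\<lambda>T. measure M {\<omega> \<in> space M. \<bar>\<phi>hat T \<omega> - \<phi>r\<bar> > \<epsilon>}) \<longlonglongrightarrow> 0 \<and>
      (\<lambda>T. measure M {\<omega> \<in> space M. \<bar>\<sigma>hat2 T \<omega> - \<sigma>r2\<bar> > \<epsilon>}) \<longlonglongrightarrow> 0"
proof (intro allI impI)
  fix \<epsilon> :: real assume e: "\<epsilon> > 0"
  obtain \<delta> where \<delta>: "\<delta> > 0" and cont: "\<And>A B Saa Sab. \<bar>A - \<phi>r\<bar> < \<delta> \<and> \<bar>B - \<phi>r\<bar> < \<delta> \<and> \<bar>Saa - (\<sigma>r2 + \<phi>r\<^sup>2 + 1 / real N)\<bar> < \<delta>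
      \<and> \<bar>Sab - (\<sigma>r2 + \<phi>r\<^sup>2)\<bar> < \<delta> \<Longrightarrow>
      Saa - A\<^sup>2 > 0 \<and> (Sab - A * B) / (Saa - A\<^sup>2) > 0 \<and> (Sab - A * B) / (Saa - A\<^sup>2) < 1 \<and>
      \<bar>phistar A B Saa Sab - \<phi>r\<bar> < \<epsilon> \<and> \<bar>sstar N A B Saa Sab - \<sigma>r2\<bar> < \<epsilon>"
    using continuity_part[OF N1 \<sigma>pos e, of \<phi>r] by blast
  define A where "A T \<omega> = mean1 T (\<lambda>t. abar t \<omega>)" for T \<omega>
  define B where "B T \<omega> = mean1 T (\<lambda>t. bbar t \<omega>)" for T \<omega>
  define Saa where "Saa T \<omega> = mean1 T (\<lambda>t. (abar t \<omega>)\<^sup>2)" for T \<omega>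
  define Sab where "Sab T \<omega> = mean1 T (\<lambda>t. abar t \<omega> * bbar t \<omega>)" for T \<omega>
  define E1 where "E1 T = {\<omega> \<in> space M. \<bar>A T \<omega> - \<phi>r\<bar> \<ge> \<delta>}" for T
  define E2 where "E2 T = {\<omega> \<in> space M. \<bar>B T \<omega> - \<phi>r\<bar> \<ge> \<delta>}" for T
  define E3 where "E3 T = {\<omega> \<in> space M. \<bar>Saa T \<omega> - (\<sigma>r2 + \<phi>r\<^sup>2 + 1 / real N)\<bar> \<ge> \<delta>}" for T
  define E4 where "E4 T = {\<omega> \<in> space M. \<bar>Sab T \<omega> - (\<sigma>r2 + \<phi>r\<^sup>2)\<bar> \<ge> \<delta>}" for T
  have Em: "E1 T \<in> sets M" "E2 T \<in> sets M" "E3 T \<in> sets M" "E4 T \<in> sets M" for T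
    unfolding E1_def E2_def E3_def E4_def A_def B_def Saa_def Sab_def by measurable
  have Np: "real N > 0" "real K > 0" using N1 K1 by auto
  have ax: "avgx N (\<lambda>t n. x t n \<omega>) = (\<lambda>t. abar t \<omega>)" if "\<omega> \<in> space M" for \<omega>
    using that Np unfolding avgx_def abar_eq by (intro ext) (simp add: x_def sum.distrib field_simps)
  have by': "avgx K (\<lambda>t k. y t k \<omega>) = (\<lambda>t. bbar t \<omega>)" if "\<omega> \<in> space M" for \<omega>
    using that Np unfolding avgx_def bbar_eq by (intro ext) (simp add: y_def sum.distrib field_simps)
  have good: "\<phi>hat T \<omega> = phistar (A T \<omega>) (B T \<omega>) (Saa T \<omega>) (Sab T \<omega>) \<and>
      \<sigma>hat2 T \<omega> = sstar N (A T \<omega>) (B T \<omega>) (Saa T \<omega>) (Sab T \<omega>) \<and>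
      \<bar>phistar (A T \<omega>) (B T \<omega>) (Saa T \<omega>) (Sab T \<omega>) - \<phi>r\<bar> < \<epsilon> \<and>
      \<bar>sstar N (A T \<omega>) (B T \<omega>) (Saa T \<omega>) (Sab T \<omega>) - \<sigma>r2\<bar> < \<epsilon>"
    if T: "T > 0" and \<omega>: "\<omega> \<in> space M" and nb: "\<omega> \<notin> E1 T \<union> E2 T \<union> E3 T \<union> E4 T" for T \<omega>
  proof -
    have c: "Saa T \<omega> - (A T \<omega>)\<^sup>2 > 0 \<and> (Sab T \<omega> - A T \<omega> * B T \<omega>) / (Saa T \<omega> - (A T \<omega>)\<^sup>2) > 0 \<and>
        (Sab T \<omega> - A T \<omega> * B T \<omega>) / (Saa T \<omega> - (A T \<omega>)\<^sup>2) < 1 \<and>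
        \<bar>phistar (A T \<omega>) (B T \<omega>) (Saa T \<omega>) (Sab T \<omega>) - \<phi>r\<bar> < \<epsilon> \<and>
        \<bar>sstar N (A T \<omega>) (B T \<omega>) (Saa T \<omega>) (Sab T \<omega>) - \<sigma>r2\<bar> < \<epsilon>"
      using nb \<omega> by (intro cont) (auto simp: E1_def E2_def E3_def E4_def)
    have st: "mean1 T (avgx N (\<lambda>t n. x t n \<omega>)) = A T \<omega>" "mean1 T (avgx K (\<lambda>t k. y t k \<omega>)) = B T \<omega>"
      "mean1 T (\<lambda>t. (avgx N (\<lambda>t n. x t n \<omega>) t)\<^sup>2) = Saa T \<omega>"
      "mean1 T (\<lambda>t. avgx N (\<lambda>t n. x t n \<omega>) t * avgx K (\<lambda>t k. y t k \<omega>) t) = Sab T \<omega>"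
      unfolding A_def B_def Saa_def Sab_def ax[OF \<omega>] by' [OF \<omega>] by simp_all
    have ex: "PLL_stationary N K T (\<lambda>t n. x t n \<omega>) (\<lambda>t k. y t k \<omega>)
        (phistar (A T \<omega>) (B T \<omega>) (Saa T \<omega>) (Sab T \<omega>)) (sstar N (A T \<omega>) (B T \<omega>) (Saa T \<omega>) (Sab T \<omega>))"
      using stationary_exists[OF N1 K1 T, of "\<lambda>t n. x t n \<omega>" "\<lambda>t k. y t k \<omega>"] c unfolding st by blast
    have "PLL_stationary N K T (\<lambda>t n. x t n \<omega>) (\<lambda>t k. y t k \<omega>) (\<phi>hat T \<omega>) (\<sigma>hat2 T \<omega>)"
      using solves[OF \<omega>] ex by blast
    from stationary_unique[OF N1 K1 T _ this] c
    show ?thesis unfolding st by blast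
  qed
  have sub1: "{\<omega> \<in> space M. \<bar>\<phi>hat T \<omega> - \<phi>r\<bar> > \<epsilon>} \<subseteq> E1 T \<union> E2 T \<union> E3 T \<union> E4 T" if "T > 0" for T
    using good[OF that] by force
  have sub2: "{\<omega> \<in> space M. \<bar>\<sigma>hat2 T \<omega> - \<sigma>r2\<bar> > \<epsilon>} \<subseteq> E1 T \<union> E2 T \<union> E3 T \<union> E4 T" if "T > 0" for T
    using good[OF that] by force
  have mU: "measure M (E1 T \<union> E2 T \<union> E3 T \<union> E4 T) \<le> measure M (E1 T) + measure M (E2 T) + measure M (E3 T) + measure M (E4 T)" for T
    using Em[of T] by (meson add_right_mono measure_Un_le order_trans sets.Un)
  have lim: "(\<lambda>T. measure M (E1 T) + measure M (E2 T) + measure M (E3 T) + measure M (E4 T)) \<longlonglongrightarrow> 0"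
  proof -
    have "(\<lambda>T. measure M (E1 T) + measure M (E2 T) + measure M (E3 T) + measure M (E4 T)) \<longlonglongrightarrow> 0 + 0 + 0 + 0"
      unfolding E1_def E2_def E3_def E4_def A_def B_def Saa_def Sab_def
      by (intro tendsto_add conv_A conv_B conv_AA conv_AB \<delta>)
    then show ?thesis by simp
  qed
  have gen: "(\<lambda>T. measure M (S T)) \<longlonglongrightarrow> 0" if Sm: "\<And>T. S T \<in> sets M" and sub: "\<And>T. T > 0 \<Longrightarrow> S T \<subseteq> E1 T \<union> E2 T \<union> E3 T \<union> E4 T" for S
  proof (rule tendsto_sandwich[OF _ _ tendsto_const lim])
    show "\<forall>\<^sub>F n in sequentially. 0 \<le> measure M (S n)" by simp
    show "\<forall>\<^sub>F n in sequentially. measure M (S n) \<le> measure M (E1 n) + measure M (E2 n) + measure M (E3 n) + measure M (E4 n)"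
    proof (rule eventually_mono[OF eventually_gt_at_top[of 0]])
      fix n :: nat assume "n > 0"
      then have "measure M (S n) \<le> measure M (E1 n \<union> E2 n \<union> E3 n \<union> E4 n)"
        using sub Em[of n] by (intro finite_measure_mono) auto
      then show "measure M (S n) \<le> measure M (E1 n) + measure M (E2 n) + measure M (E3 n) + measure M (E4 n)"
        using mU[of n] by linarith
    qed
  qed
  show "(\<lambda>T. measure M {\<omega> \<in> space M. \<bar>\<phi>hat T \<omega> - \<phi>r\<bar> > \<epsilon>}) \<longlonglongrightarrow> 0 \<and>
      (\<lambda>T. measure M {\<omega> \<in> space M. \<bar>\<sigma>hat2 T \<omega> - \<sigma>r2\<bar> > \<epsilon>}) \<longlonglongrightarrow> 0"
    using gen[OF _ sub1] gen[OF _ sub2] by simp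
qed

end

theorem proposition1:
  fixes M :: "'a measure"
    and N K :: nat
    and \<phi>r \<sigma>r2 :: real
    and \<theta> :: "nat \<Rightarrow> 'a \<Rightarrow> real"
    and ex ey :: "nat \<Rightarrow> nat \<Rightarrow> 'a \<Rightarrow> real"
    and x y :: "nat \<Rightarrow> nat \<Rightarrow> 'a \<Rightarrow> real"
    and \<phi>hat \<sigma>hat2 :: "nat \<Rightarrow> 'a \<Rightarrow> real"
  assumes "prob_space M"
    and "N \<ge> 1" and "K \<ge> 1" and "\<sigma>r2 > 0"
    and indep: "prob_space.indep_vars M (\<lambda>_. borel) (case_idx \<theta> ex ey) UNIV"
    and dist_theta: "\<And>t. distributed M lborel (\<theta> t) (normal_density \<phi>r (sqrt \<sigma>r2))"
    and dist_ex: "\<And>t n. distributed M lborel (ex t n) (normal_density 0 1)"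
    and dist_ey: "\<And>t k. distributed M lborel (ey t k) (normal_density 0 1)"
    and x_def: "\<And>t n \<omega>. \<omega> \<in> space M \<Longrightarrow> x t n \<omega> = \<theta> t \<omega> + ex t n \<omega>"
    and y_def: "\<And>t k \<omega>. \<omega> \<in> space M \<Longrightarrow> y t k \<omega> = \<theta> t \<omega> + ey t k \<omega>"
    and meas_phi: "\<And>T. \<phi>hat T \<in> borel_measurable M"
    and meas_sigma: "\<And>T. \<sigma>hat2 T \<in> borel_measurable M"
    and solves: "\<And>T \<omega>. \<omega> \<in> space M \<Longrightarrow>
        (\<exists>\<phi> s. PLL_stationary N K T (\<lambda>t n. x t n \<omega>) (\<lambda>t k. y t k \<omega>) \<phi> s) \<Longrightarrow>
        PLL_stationary N K T (\<lambda>t n. x t n \<omega>) (\<lambda>t k. y t k \<omega>) (\<phi>hat T \<omega>) (\<sigma>hat2 T \<omega>)"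
  shows "\<forall>\<epsilon>>0.
      (\<lambda>T. measure M {\<omega> \<in> space M. \<bar>\<phi>hat T \<omega> - \<phi>r\<bar> > \<epsilon>}) \<longlonglongrightarrow> 0 \<and>
      (\<lambda>T. measure M {\<omega> \<in> space M. \<bar>\<sigma>hat2 T \<omega> - \<sigma>r2\<bar> > \<epsilon>}) \<longlonglongrightarrow> 0"
  proof -
  have "model M N K \<phi>r \<sigma>r2 \<theta> ex ey"
    unfolding model_def model_axioms_def using assms by blast
  then interpret model M N K \<phi>r \<sigma>r2 \<theta> ex ey .
  show ?thesis by (rule main[OF x_def y_def meas_phi meas_sigma solves])
qed

end
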